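(* Let $G$ be a locally compact Hausdorff étale groupoid, and let $\Sigma \rightarrow G$ be a twist. Suppose there is a non-zero locally proper negative type function $\psi$ on $G$, and that $G$ has the rapid decay property with respect to the length function $L = \sqrt{\psi}$. Take any $f \in C_r^*(\Sigma; G)$ and let $U$ be the open support of $f$. Then $f$ lies in the closure of $C_c(\Sigma|_U;U)$ in the reduced norm $\|\cdot\|_r$. In particular, the conclusion holds if $G$ is second-countable, satisfies the Haagerup property (so that it admits a non-zero locally proper negative type function $\psi$), and has the rapid decay property with respect to the induced length function $L=\sqrt{\psi}$.
   Context: A twist $\Sigma\rightarrow G$ is a locally trivial central extension $\mathbb{T}\times G^{(0)}\to\Sigma\to G$, determining a line bundle over $G$. $C_c(\Sigma;G)$ is the $*$-algebra of continuous compactly supported sections (convolution, involution $f^*(\gamma)=\overline{f(\gamma^{-1})}$), and $C_r^*(\Sigma;G)$ its completion in the reduced norm $\|\cdot\|_r$ from the left regular representations. The identity on $C_c(\Sigma;G)$ extends to an injective contractive map $C_r^*(\Sigma;G)\to C_0(\Sigma;G)$, by which elements of $C_r^*(\Sigma;G)$ are regarded as sections; the open support of $f$ is $\{\gamma: f(\gamma)\ne0\}$, and $C_c(\Sigma|_U;U)$ is the set of sections in $C_c(\Sigma;G)$ supported in $U$. A locally proper negative type function is a continuous $\psi\colon G\to\mathbb{R}$ with $\psi|_{G^{(0)}}=0$, $\psi(\gamma)=\psi(\gamma^{-1})$, conditionally negative definite (for $x\in G^{(0)}$, $\gamma_1,\dots,\gamma_n\in s^{-1}(x)$, real $\lambda_i$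 with $\sum\lambda_i=0$: $\sum_{i,j}\lambda_i\lambda_j\psi(\gamma_i\gamma_j^{-1})\le0$), and such that $(\psi,r,s)\colon G\to\mathbb{R}\times G^{(0)}\times G^{(0)}$ is proper; its square root $\sqrt\psi$ is a length function ($\ge0$, vanishing on units, symmetric, subadditive). With $\|f\|_{2,p,L}=\max\{\sup_x(\sum_{\gamma\in s^{-1}(x)}|f(\gamma)|^2(1+L(\gamma))^{2p})^{1/2},\sup_x(\sum_{\gamma\in r^{-1}(x)}|f(\gamma)|^2(1+L(\gamma))^{2p})^{1/2}\}$, $G$ has the rapid decay property with respect to $L$ if there exist $c>0$ and $p\in\mathbb{Z}_+$ with $\|f\|_r\le c\|f\|_{2,p,L}$ for all $f\in C_c(\Sigma;G)$. $G$ has the Haagerup property if there is a net $(k_i)$ of positive-definite continuous functions on $G$ (for each $x$ and finite $F\subseteq s^{-1}(x)$, $[k_i(\gamma\eta^{-1})]_{\eta,\gamma\in F}$ is positive semidefinite) such that each $k_i|_{G^{(0)}}=1$, each $k_i$ restricted to $G^K_K=r^{-1}(K)\cap s^{-1}(K)$ lies in $C_0(G^K_K)$ for every compact $K\subseteq G^{(0)}$, and $k_i\to1$ uniformly on compact subsets of $G$; for second-countable $G$ the paper uses that this (in its sequential form) is equivalent to the existence of a non-zero locally proper negative type function. *)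

theory Defs
  imports "HOL-Analysis.Analysis"
begin

text \<open>An (algebraic) groupoid whose arrow set is the whole type 'a, with unit space U,
  range and source maps r, s, partial multiplication m (defined on pairs with s g = r h)
  and inverse i.\<close>
definition groupoid :: "'a set \<Rightarrow> ('a \<Rightarrow> 'a) \<Rightarrow> ('a \<Rightarrow> 'a) \<Rightarrow> ('a \<Rightarrow> 'a \<Rightarrow> 'a) \<Rightarrow> ('a \<Rightarrow> 'a) \<Rightarrow> bool" where
  "groupoid U r s m i \<longleftrightarrow>
     (\<forall>u\<in>U. r u = u \<and> s u = u) \<and> (\<forall>g. r g \<in> U \<and> s g \<in> U) \<and>
     (\<forall>g h. s g = r h \<longrightarrow> r (m g h) = r g \<and> s (m g h) = s h) \<and>
     (\<forall>g h k. s g = r h \<and> s h = r k \<longrightarrow> m (m g h) k = m g (m h k)) \<and>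
     (\<forall>g. m (r g) g = g \<and> m g (s g) = g) \<and>
     (\<forall>g. r (i g) = s g \<and> s (i g) = r g \<and> m g (i g) = r g \<and> m (i g) g = s g)"

definition topological_groupoid ::
  "'a::topological_space set \<Rightarrow> ('a \<Rightarrow> 'a) \<Rightarrow> ('a \<Rightarrow> 'a) \<Rightarrow> ('a \<Rightarrow> 'a \<Rightarrow> 'a) \<Rightarrow> ('a \<Rightarrow> 'a) \<Rightarrow> bool" where
  "topological_groupoid U r s m i \<longleftrightarrow> groupoid U r s m i \<and>
     continuous_on {(g, h). s g = r h} (\<lambda>(g, h). m g h) \<and> continuous_on UNIV i"

definition locally_compact_sp :: "'a::topological_space itself \<Rightarrow> bool" where
  "locally_compact_sp _ \<longleftrightarrow> (\<forall>x::'a. \<exists>V K. open V \<and> compact K \<and> x \<in> V \<and> V \<subseteq> K)"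

definition etale :: "('a::topological_space \<Rightarrow> 'a) \<Rightarrow> bool" where
  "etale r \<longleftrightarrow> (\<forall>g. \<exists>V. open V \<and> g \<in> V \<and> open (r ` V) \<and> (\<exists>h. homeomorphism V (r ` V) r h))"

text \<open>A twist: a locally trivial central extension  T x G0 --iota--> Sigma --p--> G.
  Sigma is the type 's with groupoid structure (S0, rS, sS, mS, iS).\<close>
definition twist ::
  "'g::topological_space set \<Rightarrow> ('g \<Rightarrow> 'g) \<Rightarrow> ('g \<Rightarrow> 'g) \<Rightarrow> ('g \<Rightarrow> 'g \<Rightarrow> 'g) \<Rightarrow> ('g \<Rightarrow> 'g) \<Rightarrow>
   's::topological_space set \<Rightarrow> ('s \<Rightarrow> 's) \<Rightarrow> ('s \<Rightarrow> 's) \<Rightarrow> ('s \<Rightarrow> 's \<Rightarrow> 's) \<Rightarrow> ('s \<Rightarrow> 's) \<Rightarrow>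
   ('s \<Rightarrow> 'g) \<Rightarrow> (complex \<Rightarrow> 'g \<Rightarrow> 's) \<Rightarrow> bool" where
  "twist G0 r s m i S0 rS sS mS iS p iota \<longleftrightarrow>
     topological_groupoid S0 rS sS mS iS \<and>
     continuous_on UNIV p \<and> surj p \<and>
     (\<forall>a b. sS a = rS b \<longrightarrow> p (mS a b) = m (p a) (p b)) \<and>
     (\<forall>a. p (iS a) = i (p a)) \<and>
     (\<exists>j. homeomorphism (sphere 0 1 \<times> G0) (p -` G0) (\<lambda>(z, x). iota z x) j) \<and>
     (\<forall>z\<in>sphere 0 1. \<forall>x\<in>G0. p (iota z x) = x) \<and>
     (\<forall>z\<in>sphere 0 1. \<forall>w\<in>sphere 0 1. \<forall>x\<in>G0.
        sS (iota z x) = rS (iota w x) \<and> mS (iota z x) (iota w x) = iota (z * w) x) \<and>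
     (\<forall>z\<in>sphere 0 1. \<forall>\<sigma>. mS (iota z (r (p \<sigma>))) \<sigma> = mS \<sigma> (iota z (s (p \<sigma>)))) \<and>
     (\<forall>\<gamma>. \<exists>V. open V \<and> \<gamma> \<in> V \<and> (\<exists>S \<phi>. continuous_on V S \<and> (\<forall>g\<in>V. p (S g) = g) \<and>
        homeomorphism (sphere 0 1 \<times> V) (p -` V) (\<lambda>(z, g). mS (iota z (r g)) (S g)) \<phi>))"

text \<open>Sections of the line bundle: functions on Sigma with f(z . sigma) = z f(sigma).\<close>
definition is_section :: "('g \<Rightarrow> 'g) \<Rightarrow> ('s \<Rightarrow> 's \<Rightarrow> 's) \<Rightarrow> ('s \<Rightarrow> 'g) \<Rightarrow> (complex \<Rightarrow> 'g \<Rightarrow> 's)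
   \<Rightarrow> ('s \<Rightarrow> complex) \<Rightarrow> bool" where
  "is_section r mS p iota f \<longleftrightarrow>
     (\<forall>\<sigma>. \<forall>z\<in>sphere 0 1. f (mS (iota z (r (p \<sigma>))) \<sigma>) = z * f \<sigma>)"

definition Cc_sec :: "('g::topological_space \<Rightarrow> 'g) \<Rightarrow> ('s::topological_space \<Rightarrow> 's \<Rightarrow> 's)
   \<Rightarrow> ('s \<Rightarrow> 'g) \<Rightarrow> (complex \<Rightarrow> 'g \<Rightarrow> 's) \<Rightarrow> ('s \<Rightarrow> complex) \<Rightarrow> bool" where
  "Cc_sec r mS p iota f \<longleftrightarrow> is_section r mS p iota f \<and> continuous_on UNIV f \<and>
     compact (closure (p ` {\<sigma>. f \<sigma> \<noteq> 0}))"

definition lift :: "('s \<Rightarrow> 'g) \<Rightarrow> 'g \<Rightarrow> 's" where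
  "lift p \<gamma> = (SOME \<sigma>. p \<sigma> = \<gamma>)"

definition l2n :: "'a set \<Rightarrow> ('a \<Rightarrow> complex) \<Rightarrow> ereal" where
  "l2n A h = (SUP F\<in>{F. finite F \<and> F \<subseteq> A}. ereal (sqrt (\<Sum>\<gamma>\<in>F. (cmod (h \<gamma>))\<^sup>2)))"

text \<open>Left regular representation at a unit x applied to a finitely supported vector xi
  on s^{-1}(x) (vectors indexed through the chosen lifts), evaluated at gamma in s^{-1}(x).\<close>
definition regrep :: "('s \<Rightarrow> 's \<Rightarrow> 's) \<Rightarrow> ('s \<Rightarrow> 's) \<Rightarrow> ('s \<Rightarrow> 'g) \<Rightarrow> ('s \<Rightarrow> complex)
   \<Rightarrow> ('g \<Rightarrow> complex) \<Rightarrow> 'g \<Rightarrow> complex" where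
  "regrep mS iS p f \<xi> \<gamma> = (\<Sum>\<eta>\<in>{\<eta>. \<xi> \<eta> \<noteq> 0}. f (mS (lift p \<gamma>) (iS (lift p \<eta>))) * \<xi> \<eta>)"

text \<open>Reduced norm: supremum over units x of the operator norms of the left regular
  representations (computed on the dense set of finitely supported unit vectors).\<close>
definition rnorm :: "'g set \<Rightarrow> ('g \<Rightarrow> 'g) \<Rightarrow> ('s \<Rightarrow> 's \<Rightarrow> 's) \<Rightarrow> ('s \<Rightarrow> 's) \<Rightarrow> ('s \<Rightarrow> 'g)
   \<Rightarrow> ('s \<Rightarrow> complex) \<Rightarrow> ereal" where
  "rnorm G0 s mS iS p f =
     (SUP (x, \<xi>)\<in>{(x, \<xi>). x \<in> G0 \<and> finite {\<eta>. \<xi> \<eta> \<noteq> 0} \<and> (\<forall>\<eta>. \<xi> \<eta> \<noteq> 0 \<longrightarrow> s \<eta> = x) \<and>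
                       (\<Sum>\<eta>\<in>{\<eta>. \<xi> \<eta> \<noteq> 0}. (cmod (\<xi> \<eta>))\<^sup>2) \<le> 1}.
        l2n {\<gamma>. s \<gamma> = x} (regrep mS iS p f \<xi>))"

text \<open>C_r^*(Sigma;G), regarded (via the injective map j) as a space of sections: the
  sections that are reduced-norm limits of elements of C_c(Sigma;G).\<close>
definition Cr_sec :: "'g::topological_space set \<Rightarrow> ('g \<Rightarrow> 'g) \<Rightarrow> ('g \<Rightarrow> 'g) \<Rightarrow>
   ('s::topological_space \<Rightarrow> 's \<Rightarrow> 's) \<Rightarrow> ('s \<Rightarrow> 's) \<Rightarrow> ('s \<Rightarrow> 'g) \<Rightarrow> (complex \<Rightarrow> 'g \<Rightarrow> 's)
   \<Rightarrow> ('s \<Rightarrow> complex) \<Rightarrow> bool" where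
  "Cr_sec G0 r s mS iS p iota f \<longleftrightarrow> is_section r mS p iota f \<and>
     (\<exists>fn. (\<forall>n. Cc_sec r mS p iota (fn n)) \<and>
        ((\<lambda>n. rnorm G0 s mS iS p (\<lambda>\<sigma>. f \<sigma> - fn n \<sigma>)) \<longlongrightarrow> 0) sequentially)"

definition locally_proper_negative_type ::
  "'g::topological_space set \<Rightarrow> ('g \<Rightarrow> 'g) \<Rightarrow> ('g \<Rightarrow> 'g) \<Rightarrow> ('g \<Rightarrow> 'g \<Rightarrow> 'g) \<Rightarrow> ('g \<Rightarrow> 'g)
   \<Rightarrow> ('g \<Rightarrow> real) \<Rightarrow> bool" where
  "locally_proper_negative_type G0 r s m i \<psi> \<longleftrightarrow>
     continuous_on UNIV \<psi> \<and> (\<forall>x\<in>G0. \<psi> x = 0) \<and> (\<forall>g. \<psi> (i g) = \<psi> g) \<and>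
     (\<forall>x\<in>G0. \<forall>n (\<gamma>::nat \<Rightarrow> 'g) (c::nat \<Rightarrow> real).
        (\<forall>k<n. s (\<gamma> k) = x) \<and> (\<Sum>k<n. c k) = 0 \<longrightarrow>
        (\<Sum>k<n. \<Sum>l<n. c k * c l * \<psi> (m (\<gamma> k) (i (\<gamma> l)))) \<le> 0) \<and>
     (\<forall>K. compact K \<and> K \<subseteq> UNIV \<times> G0 \<times> G0 \<longrightarrow> compact {g. (\<psi> g, r g, s g) \<in> K})"

definition norm_2pL :: "'g set \<Rightarrow> ('g \<Rightarrow> 'g) \<Rightarrow> ('g \<Rightarrow> 'g) \<Rightarrow> ('s \<Rightarrow> 'g) \<Rightarrow> ('g \<Rightarrow> real)
   \<Rightarrow> nat \<Rightarrow> ('s \<Rightarrow> complex) \<Rightarrow> ereal" where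
  "norm_2pL G0 r s p L k f =
     max (SUP x\<in>G0. l2n {\<gamma>. s \<gamma> = x} (\<lambda>\<gamma>. f (lift p \<gamma>) * complex_of_real ((1 + L \<gamma>) ^ k)))
         (SUP x\<in>G0. l2n {\<gamma>. r \<gamma> = x} (\<lambda>\<gamma>. f (lift p \<gamma>) * complex_of_real ((1 + L \<gamma>) ^ k)))"

definition rapid_decay ::
  "'g::topological_space set \<Rightarrow> ('g \<Rightarrow> 'g) \<Rightarrow> ('g \<Rightarrow> 'g) \<Rightarrow> ('s::topological_space \<Rightarrow> 's \<Rightarrow> 's)
   \<Rightarrow> ('s \<Rightarrow> 's) \<Rightarrow> ('s \<Rightarrow> 'g) \<Rightarrow> (complex \<Rightarrow> 'g \<Rightarrow> 's) \<Rightarrow> ('g \<Rightarrow> real) \<Rightarrow> bool" where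
  "rapid_decay G0 r s mS iS p iota L \<longleftrightarrow>
     (\<exists>c>0. \<exists>k::nat. \<forall>f. Cc_sec r mS p iota f \<longrightarrow>
        rnorm G0 s mS iS p f \<le> ereal c * norm_2pL G0 r s p L k f)"

end

theory Submission
  imports Defs
begin


locale grpd =
  fixes U :: "'a set" and r s :: "'a \<Rightarrow> 'a" and m :: "'a \<Rightarrow> 'a \<Rightarrow> 'a" and i :: "'a \<Rightarrow> 'a"
  assumes grpd: "groupoid U r s m i"
begin

lemma unit_r: "u \<in> U \<Longrightarrow> r u = u" and unit_s: "u \<in> U \<Longrightarrow> s u = u"
  and r_in: "r g \<in> U" and s_in: "s g \<in> U"
  and r_m: "s g = r h \<Longrightarrow> r (m g h) = r g" and s_m: "s g = r h \<Longrightarrow> s (m g h) = s h"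
  and assoc: "s g = r h \<Longrightarrow> s h = r k \<Longrightarrow> m (m g h) k = m g (m h k)"
  and m_r: "m (r g) g = g" and m_s: "m g (s g) = g"
  and r_i: "r (i g) = s g" and s_i: "s (i g) = r g"
  and m_i: "m g (i g) = r g" and i_m: "m (i g) g = s g"
  using grpd unfolding groupoid_def by blast+

lemma i_unit: "x \<in> U \<Longrightarrow> i x = x"
  by (metis m_r r_i unit_s m_i unit_r)

lemma inv_unique: assumes "s a = r b" "m a b = r a" shows "b = i a"
proof -
  have "b = m (r b) b" by (simp add: m_r)
  also have "\<dots> = m (m (i a) a) b" using assms by (simp add: i_m)
  also have "\<dots> = m (i a) (m a b)" using assms by (simp add: assoc s_i)
  also have "\<dots> = m (i a) (s (i a))" using assms by (simp add: s_i)
  also have "\<dots> = i a" by (simp add: m_s)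
  finally show ?thesis .
qed

lemma i_i: "i (i g) = g"
proof -
  have "g = i (i g)"
    by (rule inv_unique) (auto simp: s_i i_m r_i)
  then show ?thesis by simp
qed

lemma m_unit_right: "s g = x \<Longrightarrow> m g (i x) = g"
  by (metis i_unit m_s s_in)

lemma m_unit_left: "s g = x \<Longrightarrow> m x (i g) = i g"
  by (metis m_r r_i)

lemma inv_prod: assumes "s a = s b" shows "i (m a (i b)) = m b (i a)"
proof -
  let ?u = "m a (i b)" and ?v = "m b (i a)"
  have c1: "s a = r (i b)" using assms by (simp add: r_i)
  have su: "s ?u = r b" using c1 by (simp add: s_m s_i)
  have ru: "r ?u = r a" using c1 by (simp add: r_m)
  have c2: "s b = r (i a)" using assms by (simp add: r_i)
  have rv: "r ?v = r b" using c2 by (simp add: r_m)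
  have "m ?u ?v = m a (m (i b) (m b (i a)))"
    using c1 rv by (intro assoc) (auto simp: s_i)
  also have "m (i b) (m b (i a)) = m (m (i b) b) (i a)"
    using c2 by (simp add: assoc s_i)
  also have "\<dots> = m (s b) (i a)" by (simp add: i_m)
  also have "\<dots> = i a" using c2 by (simp add: m_r)
  finally have "m ?u ?v = r ?u" using ru by (simp add: m_i)
  then have "?v = i ?u" using su rv by (intro inv_unique) auto
  then show ?thesis by simp
qed

lemma r_m_i: "s g = s h \<Longrightarrow> r (m g (i h)) = r g"
  by (simp add: r_m r_i)
lemma s_m_i: "s g = s h \<Longrightarrow> s (m g (i h)) = r h"
  by (simp add: s_m r_i s_i)

end


locale tw = G: grpd G0 r s m i + S: grpd S0 rS sS mS iS
  for G0 :: "'g::t2_space set" and r s i :: "'g \<Rightarrow> 'g" and m :: "'g \<Rightarrow> 'g \<Rightarrow> 'g"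
    and S0 :: "'s::topological_space set" and rS sS iS :: "'s \<Rightarrow> 's" and mS :: "'s \<Rightarrow> 's \<Rightarrow> 's" +
  fixes p :: "'s \<Rightarrow> 'g" and iota :: "complex \<Rightarrow> 'g \<Rightarrow> 's"
  assumes tg: "topological_groupoid G0 r s m i"
    and et: "etale r"
    and tw: "twist G0 r s m i S0 rS sS mS iS p iota"
begin

lemma p_cont: "continuous_on UNIV p" and p_surj: "surj p"
  and p_hom: "sS a = rS b \<Longrightarrow> p (mS a b) = m (p a) (p b)"
  and p_i: "p (iS a) = i (p a)"
  and iota_homeo: "\<exists>j. homeomorphism (sphere 0 1 \<times> G0) (p -` G0) (\<lambda>(z, x). iota z x) j"
  and p_iota: "z \<in> sphere 0 1 \<Longrightarrow> x \<in> G0 \<Longrightarrow> p (iota z x) = x"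
  and iota_mult: "z \<in> sphere 0 1 \<Longrightarrow> w \<in> sphere 0 1 \<Longrightarrow> x \<in> G0 \<Longrightarrow>
        sS (iota z x) = rS (iota w x) \<and> mS (iota z x) (iota w x) = iota (z * w) x"
  and loc_triv: "\<exists>V. open V \<and> \<gamma> \<in> V \<and> (\<exists>S \<phi>. continuous_on V S \<and> (\<forall>g\<in>V. p (S g) = g) \<and>
        homeomorphism (sphere 0 1 \<times> V) (p -` V) (\<lambda>(z, g). mS (iota z (r g)) (S g)) \<phi>)"
  using tw unfolding twist_def by blast+

lemma i_cont: "continuous_on UNIV i"
  using tg unfolding topological_groupoid_def by blast

lemma p_lift: "p (lift p \<gamma>) = \<gamma>"
  unfolding lift_def by (metis (mono_tags, lifting) p_surj someI surj_def)

lemma iota_img: "(\<lambda>(z, x). iota z x) ` (sphere 0 1 \<times> G0) = p -` G0"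
  using iota_homeo unfolding homeomorphism_def by blast

lemma iota_inj: assumes "z \<in> sphere 0 1" "w \<in> sphere 0 1" "x \<in> G0" "y \<in> G0" "iota z x = iota w y"
  shows "z = w \<and> x = y"
proof -
  obtain j where "homeomorphism (sphere 0 1 \<times> G0) (p -` G0) (\<lambda>(z, x). iota z x) j"
    using iota_homeo by blast
  then have "\<forall>a\<in>sphere 0 1 \<times> G0. j ((\<lambda>(z, x). iota z x) a) = a"
    unfolding homeomorphism_def by blast
  then have "j (iota z x) = (z, x)" "j (iota w y) = (w, y)" using assms(1-4) by auto
  then show ?thesis using assms(5) by (metis prod.inject)
qed

lemma p_rS: "p (rS a) = r (p a)"
proof -
  have "p (rS a) = p (mS a (iS a))" by (simp add: S.m_i)
  also have "\<dots> = m (p a) (i (p a))" by (simp add: p_hom S.r_i p_i)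
  finally show ?thesis by (simp add: G.m_i)
qed

lemma p_sS: "p (sS a) = s (p a)"
proof -
  have "p (sS a) = p (mS (iS a) a)" by (simp add: S.i_m)
  also have "\<dots> = m (i (p a)) (p a)" by (simp add: p_hom S.s_i p_i)
  finally show ?thesis by (simp add: G.i_m)
qed

lemma unit_unique: assumes "u \<in> S0" shows "u = iota 1 (p u)" "p u \<in> G0"
proof -
  have "p u = r (p u)" using p_rS[of u] S.unit_r[OF assms] by simp
  then show pu: "p u \<in> G0" by (metis G.r_in)
  then have "u \<in> (\<lambda>(z, x). iota z x) ` (sphere 0 1 \<times> G0)" using iota_img by auto
  then obtain z y where zy: "z \<in> sphere 0 1" "y \<in> G0" "u = iota z y" by auto
  have y: "y = p u" using zy p_iota by simp
  have "mS u u = u" using S.m_s[of u] S.unit_s[OF assms] by simp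
  then have "iota (z * z) y = iota z y" using iota_mult[OF zy(1) zy(1) zy(2)] zy(3) by simp
  moreover have "z * z \<in> sphere 0 1" using zy(1) by (simp add: norm_mult)
  ultimately have "z * z = z" using iota_inj zy by blast
  moreover have "z \<noteq> 0" using zy(1) by auto
  ultimately have "z * (z - 1) = 0" by (simp add: algebra_simps)
  then have "z = 1" using \<open>z \<noteq> 0\<close> by simp
  then show "u = iota 1 (p u)" using zy(3) y by metis
qed

lemma sS_eq: "sS a = iota 1 (s (p a))"
  using unit_unique(1)[OF S.s_in[of a]] by (simp add: p_sS)

lemma rS_eq: "rS a = iota 1 (r (p a))"
  using unit_unique(1)[OF S.r_in[of a]] by (simp add: p_rS)

lemma sphere1: "(1::complex) \<in> sphere 0 1" by simp

lemma sS_iota: "z \<in> sphere 0 1 \<Longrightarrow> x \<in> G0 \<Longrightarrow> sS (iota z x) = iota 1 x"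
  by (simp add: sS_eq p_iota G.unit_s)

lemma rS_iota: "z \<in> sphere 0 1 \<Longrightarrow> x \<in> G0 \<Longrightarrow> rS (iota z x) = iota 1 x"
  by (simp add: rS_eq p_iota G.unit_r)

lemma p_act: "z \<in> sphere 0 1 \<Longrightarrow> p (mS (iota z (r (p a))) a) = p a"
  by (simp add: p_hom sS_iota rS_eq G.r_in p_iota G.m_r)

lemma fiber: assumes "p b = p a" shows "\<exists>z\<in>sphere 0 1. b = mS (iota z (r (p a))) a"
proof -
  let ?t = "mS b (iS a)"
  have c: "sS b = rS (iS a)" using assms by (simp add: S.r_i sS_eq)
  have pt: "p ?t = r (p a)" using c assms by (simp add: p_hom p_i G.m_i)
  then have "?t \<in> p -` G0" by (simp add: G.r_in)
  then have "?t \<in> (\<lambda>(z, x). iota z x) ` (sphere 0 1 \<times> G0)" using iota_img by simp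
  then obtain zy where "zy \<in> sphere 0 1 \<times> G0" "?t = (\<lambda>(z, x). iota z x) zy" by blast
  then obtain z y where zy: "z \<in> sphere 0 1" "y \<in> G0" "?t = iota z y" by auto
  have y: "y = r (p a)" using pt zy p_iota by simp
  have "mS ?t a = mS b (mS (iS a) a)" using c by (intro S.assoc) (auto simp: S.s_i)
  also have "\<dots> = mS b (sS a)" by (simp add: S.i_m)
  also have "sS a = sS b" using assms by (simp add: sS_eq)
  also have "mS b (sS b) = b" by (simp add: S.m_s)
  finally show ?thesis using zy y by auto
qed

lemma section_mod: assumes "is_section r mS p iota h" "p b = p a" shows "cmod (h b) = cmod (h a)"
proof -
  obtain z where "z \<in> sphere 0 1" "b = mS (iota z (r (p a))) a" using fiber[OF assms(2)] by blast
  then have "h b = z * h a" using assms(1) unfolding is_section_def by blast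
  moreover have "cmod z = 1" using \<open>z \<in> sphere 0 1\<close> by simp
  ultimately show ?thesis by (simp only: norm_mult)
qed

lemma section_mod_lift: "is_section r mS p iota h \<Longrightarrow> cmod (h (lift p (p a))) = cmod (h a)"
  using section_mod[of h "lift p (p a)" a] p_lift[of "p a"] by blast

lemma regrep_p: "s \<gamma> = s \<eta> \<Longrightarrow> p (mS (lift p \<gamma>) (iS (lift p \<eta>))) = m \<gamma> (i \<eta>)"
proof -
  assume a: "s \<gamma> = s \<eta>"
  have "sS (lift p \<gamma>) = rS (iS (lift p \<eta>))" unfolding S.r_i sS_eq p_lift using a by simp
  from p_hom[OF this] show ?thesis by (simp only: p_lift p_i)
qed

end


definition psd :: "'a set \<Rightarrow> ('a \<Rightarrow> 'a \<Rightarrow> real) \<Rightarrow> bool" where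
  "psd P K \<longleftrightarrow> (\<forall>c. 0 \<le> (\<Sum>k\<in>P. \<Sum>l\<in>P. c k * c l * K k l))"

definition symm :: "'a set \<Rightarrow> ('a \<Rightarrow> 'a \<Rightarrow> real) \<Rightarrow> bool" where
  "symm P K \<longleftrightarrow> (\<forall>k\<in>P. \<forall>l\<in>P. K k l = K l k)"

lemma psdD: "psd P K \<Longrightarrow> 0 \<le> (\<Sum>k\<in>P. \<Sum>l\<in>P. c k * c l * K k l)"
  unfolding psd_def by blast

lemma delta_sum: "finite P \<Longrightarrow> a \<in> P \<Longrightarrow> (\<Sum>l\<in>P. (if l = a then 1 else 0) * X l) = (X a :: real)"
proof -
  assume "finite P" "a \<in> P"
  have "(\<Sum>l\<in>P. (if l = a then 1 else 0) * X l) = (\<Sum>l\<in>P. (if l = a then X l else 0))"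
    by (rule sum.cong) auto
  then show ?thesis using \<open>finite P\<close> \<open>a \<in> P\<close> by simp
qed

lemma psd_diag: assumes "psd P K" "a \<in> P" "finite P" shows "0 \<le> K a a"
proof -
  have "0 \<le> (\<Sum>k\<in>P. \<Sum>l\<in>P. (if k = a then 1 else 0) * (if l = a then 1 else 0) * K k l)"
    by (rule psdD[OF assms(1)])
  also have "\<dots> = (\<Sum>k\<in>P. (if k = a then 1 else 0) * (\<Sum>l\<in>P. (if l = a then 1 else 0) * K k l))"
    by (simp add: sum_distrib_left mult.assoc)
  also have "\<dots> = K a a" using assms(2,3) by (simp add: delta_sum)
  finally show ?thesis .
qed

lemma psd_offdiag_zero:
  assumes "psd P K" "symm P K" "finite P" "a \<in> P" "b \<in> P" "a \<noteq> b" "K a a = 0"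
  shows "K a b = 0"
proof (rule ccontr)
  assume nz: "K a b \<noteq> 0"
  define lam where "lam = - (K b b + 1) / (2 * K a b)"
  define c where "c x = lam * (if x = a then 1 else 0) + (if x = b then 1 else 0)" for x
  have lin: "(\<Sum>l\<in>P. c l * X l) = lam * X a + X b" for X :: "'a \<Rightarrow> real"
  proof -
    have "(\<Sum>l\<in>P. c l * X l) = (\<Sum>l\<in>P. lam * (if l = a then X l else 0) + (if l = b then X l else 0))"
      by (rule sum.cong) (auto simp: c_def algebra_simps)
    also have "\<dots> = lam * X a + X b"
      using assms(3-6) by (auto simp: sum.distrib sum_distrib_left[symmetric] distrib_right)
    finally show ?thesis .
  qed
  have "0 \<le> (\<Sum>k\<in>P. \<Sum>l\<in>P. c k * c l * K k l)" by (rule psdD[OF assms(1)])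
  also have "\<dots> = (\<Sum>k\<in>P. c k * (\<Sum>l\<in>P. c l * K k l))"
    by (simp add: sum_distrib_left mult.assoc)
  also have "\<dots> = (\<Sum>k\<in>P. c k * (lam * K k a + K k b))" by (simp add: lin)
  also have "\<dots> = lam * (lam * K a a + K a b) + (lam * K b a + K b b)" by (rule lin)
  also have "\<dots> = 2 * lam * K a b + K b b" using assms(2,4,5,7) unfolding symm_def by (simp add: algebra_simps)
  also have "\<dots> = -1" using nz by (simp add: lam_def field_simps)
  finally show False by simp
qed


lemma sum_insert2:
  assumes "finite P" "a \<notin> P"
  shows "(\<Sum>k\<in>insert a P. \<Sum>l\<in>insert a P. F k l) =
    F a a + (\<Sum>l\<in>P. F a l) + (\<Sum>k\<in>P. F k a) + (\<Sum>k\<in>P. \<Sum>l\<in>P. F k l)"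
  using assms by (simp add: sum.insert sum.distrib add_ac)

lemma gram:
  assumes "finite P" "psd P K" "symm P K"
  shows "\<exists>(n::nat) V. \<forall>k\<in>P. \<forall>l\<in>P. K k l = (\<Sum>j<n. V k j * V l j)"
  using assms
proof (induction P arbitrary: K rule: finite_induct)
  case empty
  then show ?case by auto
next
  case (insert a P)
  let ?Q = "insert a P"
  define K' where "K' k l = K k l - K k a * K l a / K a a" for k l
  have Kaa: "0 \<le> K a a" using psd_diag[OF insert.prems(1)] insert.hyps by auto
  have sym: "K k l = K l k" if "k \<in> ?Q" "l \<in> ?Q" for k l
    using insert.prems(2) that unfolding symm_def by blast
  have "psd P K'"
    unfolding psd_def
  proof
    fix c :: "'a \<Rightarrow> real"
    define S where "S = (\<Sum>k\<in>P. c k * K k a)"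
    define c' where "c' = c(a := - S / K a a)"
    have c'P: "c' k = c k" if "k \<in> P" for k using that insert.hyps by (auto simp: c'_def)
    have "0 \<le> (\<Sum>k\<in>?Q. \<Sum>l\<in>?Q. c' k * c' l * K k l)" by (rule psdD[OF insert.prems(1)])
    also have "\<dots> = c' a * c' a * K a a + (\<Sum>l\<in>P. c' a * c' l * K a l) + (\<Sum>k\<in>P. c' k * c' a * K k a)
        + (\<Sum>k\<in>P. \<Sum>l\<in>P. c' k * c' l * K k l)"
      by (rule sum_insert2[OF insert.hyps])
    also have "(\<Sum>l\<in>P. c' a * c' l * K a l) = c' a * S"
      unfolding S_def sum_distrib_left using sym c'P by (intro sum.cong) auto
    also have "(\<Sum>k\<in>P. c' k * c' a * K k a) = c' a * S"
      unfolding S_def sum_distrib_left using c'P by (intro sum.cong) auto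
    also have "(\<Sum>k\<in>P. \<Sum>l\<in>P. c' k * c' l * K k l) = (\<Sum>k\<in>P. \<Sum>l\<in>P. c k * c l * K k l)"
      using c'P by (intro sum.cong) auto
    finally have A: "0 \<le> c' a * c' a * K a a + c' a * S + c' a * S + (\<Sum>k\<in>P. \<Sum>l\<in>P. c k * c l * K k l)" .
    have B: "(\<Sum>k\<in>P. \<Sum>l\<in>P. c k * c l * K' k l) = (\<Sum>k\<in>P. \<Sum>l\<in>P. c k * c l * K k l) - S * S / K a a"
    proof -
      have "(\<Sum>k\<in>P. \<Sum>l\<in>P. c k * c l * K' k l) = (\<Sum>k\<in>P. \<Sum>l\<in>P. c k * c l * K k l - (c k * K k a) * (c l * K l a) / K a a)"
        unfolding K'_def by (simp add: algebra_simps)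
      also have "\<dots> = (\<Sum>k\<in>P. \<Sum>l\<in>P. c k * c l * K k l) - (\<Sum>k\<in>P. \<Sum>l\<in>P. (c k * K k a) * (c l * K l a) / K a a)"
        by (simp add: sum_subtractf)
      also have "(\<Sum>k\<in>P. \<Sum>l\<in>P. (c k * K k a) * (c l * K l a) / K a a) = S * S / K a a"
        unfolding S_def by (simp add: sum_divide_distrib[symmetric] sum_product)
      finally show ?thesis .
    qed
    show "0 \<le> (\<Sum>k\<in>P. \<Sum>l\<in>P. c k * c l * K' k l)"
    proof (cases "K a a = 0")
      case True
      then show ?thesis using A B by (simp add: c'_def)
    next
      case False
      then have "c' a * c' a * K a a + c' a * S + c' a * S = - S * S / K a a"
        by (simp add: c'_def field_simps)
      then show ?thesis using A B by simp
    qed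
  qed
  moreover have "symm P K'" unfolding symm_def K'_def using sym by auto
  ultimately obtain n :: nat and V where V: "\<forall>k\<in>P. \<forall>l\<in>P. K' k l = (\<Sum>j<n. V k j * V l j)"
    using insert.IH insert.hyps by blast
  define W where "W k j = (if j < n then (if k = a then 0 else V k j)
      else (if k = a then sqrt (K a a) else K k a / sqrt (K a a)))" for k j
  have Wsum: "(\<Sum>j<Suc n. W k j * W l j) = (\<Sum>j<n. W k j * W l j) + W k n * W l n" for k l
    by simp
  have off: "K k a = 0" if "k \<in> P" "K a a = 0" for k
  proof -
    have "K a k = 0" using psd_offdiag_zero[OF insert.prems(1,2)] insert.hyps that by auto
    then show ?thesis using sym that by auto
  qed
  have "\<forall>k\<in>?Q. \<forall>l\<in>?Q. K k l = (\<Sum>j<Suc n. W k j * W l j)"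
  proof (intro ballI)
    fix k l assume k: "k \<in> ?Q" and l: "l \<in> ?Q"
    show "K k l = (\<Sum>j<Suc n. W k j * W l j)"
    proof (cases "k = a")
      case ka: True
      show ?thesis
      proof (cases "l = a")
        case True
        then show ?thesis using ka Kaa by (simp add: W_def)
      next
        case False
        then have lP: "l \<in> P" using l by auto
        have "(\<Sum>j<Suc n. W k j * W l j) = sqrt (K a a) * (K l a / sqrt (K a a))"
          using ka False by (simp add: W_def)
        also have "\<dots> = K a l"
          using off[OF lP] sym[of l a] l by (cases "K a a = 0") auto
        finally show ?thesis using ka by simp
      qed
    next
      case kna: False
      then have kP: "k \<in> P" using k by auto
      show ?thesis
      proof (cases "l = a")
        case True
        have "(\<Sum>j<Suc n. W k j * W l j) = (K k a / sqrt (K a a)) * sqrt (K a a)"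
          using kna True by (simp add: W_def)
        also have "\<dots> = K k a"
          using off[OF kP] by (cases "K a a = 0") auto
        finally show ?thesis using True by simp
      next
        case lna: False
        then have lP: "l \<in> P" using l by auto
        have "(\<Sum>j<n. W k j * W l j) = (\<Sum>j<n. V k j * V l j)"
          using kna lna by (intro sum.cong) (auto simp: W_def)
        also have "\<dots> = K' k l" using V kP lP by auto
        finally have "(\<Sum>j<Suc n. W k j * W l j) = K' k l + (K k a / sqrt (K a a)) * (K l a / sqrt (K a a))"
          using kna lna by (simp add: W_def)
        also have "\<dots> = K k l"
          using Kaa by (cases "K a a = 0") (auto simp: K'_def)
        finally show ?thesis by simp
      qed
    qed
  qed
  then show ?case by blast
qed


lemma schur:
  assumes "finite P" "psd P A" "symm P A" "psd P B"
  shows "psd P (\<lambda>k l. A k l * B k l)"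
  unfolding psd_def
proof
  fix c :: "'a \<Rightarrow> real"
  obtain n :: nat and V where V: "\<forall>k\<in>P. \<forall>l\<in>P. A k l = (\<Sum>j<n. V k j * V l j)"
    using gram[OF assms(1-3)] by blast
  have "(\<Sum>k\<in>P. \<Sum>l\<in>P. c k * c l * (A k l * B k l)) =
        (\<Sum>k\<in>P. \<Sum>l\<in>P. \<Sum>j<n. (c k * V k j) * (c l * V l j) * B k l)"
    using V by (intro sum.cong refl) (simp add: sum_distrib_left sum_distrib_right algebra_simps)
  also have "\<dots> = (\<Sum>j<n. \<Sum>k\<in>P. \<Sum>l\<in>P. (c k * V k j) * (c l * V l j) * B k l)"
  proof -
    have "(\<Sum>k\<in>P. \<Sum>l\<in>P. \<Sum>j<n. (c k * V k j) * (c l * V l j) * B k l) =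
          (\<Sum>k\<in>P. \<Sum>j<n. \<Sum>l\<in>P. (c k * V k j) * (c l * V l j) * B k l)"
      by (rule sum.cong[OF refl], rule sum.swap)
    also have "\<dots> = (\<Sum>j<n. \<Sum>k\<in>P. \<Sum>l\<in>P. (c k * V k j) * (c l * V l j) * B k l)"
      by (rule sum.swap)
    finally show ?thesis .
  qed
  also have "0 \<le> \<dots>"
    by (rule sum_nonneg) (rule psdD[OF assms(4)])
  finally show "0 \<le> (\<Sum>k\<in>P. \<Sum>l\<in>P. c k * c l * (A k l * B k l))" .
qed

lemma psd_power:
  assumes "finite P" "psd P B" "symm P B"
  shows "psd P (\<lambda>k l. B k l ^ n)"
proof (induction n)
  case 0
  show ?case unfolding psd_def
  proof
    fix c :: "'a \<Rightarrow> real"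
    have "(\<Sum>k\<in>P. \<Sum>l\<in>P. c k * c l * B k l ^ 0) = (\<Sum>k\<in>P. c k) * (\<Sum>k\<in>P. c k)"
      by (simp add: sum_product)
    then show "0 \<le> (\<Sum>k\<in>P. \<Sum>l\<in>P. c k * c l * B k l ^ 0)" by simp
  qed
next
  case (Suc n)
  have "symm P (\<lambda>k l. B k l ^ n)" using assms(3) unfolding symm_def by auto
  from schur[OF assms(1) Suc this assms(2)] show ?case by (simp add: mult.commute)
qed

lemma psd_exp:
  assumes "finite P" "psd P B" "symm P B"
  shows "psd P (\<lambda>k l. exp (B k l))"
  unfolding psd_def
proof
  fix c :: "'a \<Rightarrow> real"
  have S: "(\<lambda>n. \<Sum>k\<in>P. \<Sum>l\<in>P. c k * c l * (B k l ^ n /\<^sub>R fact n)) sums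
        (\<Sum>k\<in>P. \<Sum>l\<in>P. c k * c l * exp (B k l))"
    by (intro sums_sum sums_mult exp_converges)
  have N: "0 \<le> (\<Sum>k\<in>P. \<Sum>l\<in>P. c k * c l * (B k l ^ n /\<^sub>R fact n))" for n
  proof -
    have "(\<Sum>k\<in>P. \<Sum>l\<in>P. c k * c l * (B k l ^ n /\<^sub>R fact n)) =
          (\<Sum>k\<in>P. \<Sum>l\<in>P. c k * c l * B k l ^ n) / fact n"
      by (simp add: sum_divide_distrib sum_distrib_left divide_inverse algebra_simps)
    also have "0 \<le> \<dots>" using psdD[OF psd_power[OF assms, of n]] by simp
    finally show ?thesis .
  qed
  show "0 \<le> (\<Sum>k\<in>P. \<Sum>l\<in>P. c k * c l * exp (B k l))"
    by (rule sums_le[OF _ sums_zero S]) (use N in blast)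
qed

lemma psd_scale: "psd P B \<Longrightarrow> 0 \<le> t \<Longrightarrow> psd P (\<lambda>k l. t * B k l)"
  unfolding psd_def
proof
  fix c :: "'a \<Rightarrow> real"
  assume a: "\<forall>c. 0 \<le> (\<Sum>k\<in>P. \<Sum>l\<in>P. c k * c l * B k l)" "0 \<le> t"
  have "(\<Sum>k\<in>P. \<Sum>l\<in>P. c k * c l * (t * B k l)) = t * (\<Sum>k\<in>P. \<Sum>l\<in>P. c k * c l * B k l)"
    by (simp add: sum_distrib_left algebra_simps)
  then show "0 \<le> (\<Sum>k\<in>P. \<Sum>l\<in>P. c k * c l * (t * B k l))" using a by simp
qed

lemma psd_diag_scale: "psd P B \<Longrightarrow> psd P (\<lambda>k l. d k * d l * B k l)"
  unfolding psd_def
proof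
  fix c :: "'a \<Rightarrow> real"
  assume a: "\<forall>c. 0 \<le> (\<Sum>k\<in>P. \<Sum>l\<in>P. c k * c l * B k l)"
  have "(\<Sum>k\<in>P. \<Sum>l\<in>P. c k * c l * (d k * d l * B k l)) = (\<Sum>k\<in>P. \<Sum>l\<in>P. (c k * d k) * (c l * d l) * B k l)"
    by (simp add: algebra_simps)
  then show "0 \<le> (\<Sum>k\<in>P. \<Sum>l\<in>P. c k * c l * (d k * d l * B k l))" using a by simp
qed


locale gpsi = grpd U r s m i for U :: "'a::topological_space set" and r s m i +
  fixes \<psi> :: "'a \<Rightarrow> real"
  assumes lpnt: "locally_proper_negative_type U r s m i \<psi>"
begin

lemma psi_cont: "continuous_on UNIV \<psi>"
  using lpnt unfolding locally_proper_negative_type_def by (rule conjunct1)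
lemma psi_unit_all: "\<forall>x\<in>U. \<psi> x = 0"
  using lpnt unfolding locally_proper_negative_type_def by (rule conjunct1[OF conjunct2])
lemma psi_i_all: "\<forall>g. \<psi> (i g) = \<psi> g"
  using lpnt unfolding locally_proper_negative_type_def by (rule conjunct1[OF conjunct2[OF conjunct2]])
lemma cnd_all: "\<forall>x\<in>U. \<forall>n (\<gamma>::nat \<Rightarrow> 'a) (c::nat \<Rightarrow> real).
        (\<forall>k<n. s (\<gamma> k) = x) \<and> (\<Sum>k<n. c k) = 0 \<longrightarrow>
        (\<Sum>k<n. \<Sum>l<n. c k * c l * \<psi> (m (\<gamma> k) (i (\<gamma> l)))) \<le> 0"
  using lpnt unfolding locally_proper_negative_type_def by (rule conjunct1[OF conjunct2[OF conjunct2[OF conjunct2]]])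
lemma psi_unit: "x \<in> U \<Longrightarrow> \<psi> x = 0" using psi_unit_all by blast
lemma psi_i: "\<psi> (i g) = \<psi> g" using psi_i_all by blast
lemma cnd: "x \<in> U \<Longrightarrow> (\<forall>k<(n::nat). s ((\<gamma>::nat \<Rightarrow> 'a) k) = x) \<Longrightarrow> (\<Sum>k<n. c k) = 0 \<Longrightarrow>
     (\<Sum>k<n. \<Sum>l<n. c k * c l * \<psi> (m (\<gamma> k) (i (\<gamma> l)))) \<le> 0"
  using cnd_all[rule_format, of x n \<gamma> c] by blast

lemma cnd_set:
  assumes x: "x \<in> U" and Q: "finite Q" "Q \<subseteq> {\<gamma>. s \<gamma> = x}" and d: "(\<Sum>k\<in>Q. d k) = 0"
  shows "(\<Sum>k\<in>Q. \<Sum>l\<in>Q. d k * d l * \<psi> (m k (i l))) \<le> 0"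
proof -
  obtain h where h: "bij_betw h {..<card Q} Q"
    using ex_bij_betw_nat_finite[OF Q(1)] atLeast0LessThan by auto
  have hQ: "h k \<in> Q" if "k < card Q" for k using h that unfolding bij_betw_def by auto
  have reidx: "(\<Sum>k<card Q. F (h k)) = (\<Sum>k\<in>Q. F k)" for F :: "'a \<Rightarrow> real"
    using sum.reindex_bij_betw[OF h] by simp
  have "(\<Sum>k<card Q. \<Sum>l<card Q. (d \<circ> h) k * (d \<circ> h) l * \<psi> (m (h k) (i (h l)))) \<le> 0"
    using hQ Q(2) d by (intro cnd[OF x]) (auto simp: reidx[of d, simplified])
  moreover have "(\<Sum>k<card Q. \<Sum>l<card Q. (d \<circ> h) k * (d \<circ> h) l * \<psi> (m (h k) (i (h l))))
      = (\<Sum>k\<in>Q. \<Sum>l\<in>Q. d k * d l * \<psi> (m k (i l)))"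
  proof -
    have "(\<Sum>k<card Q. \<Sum>l<card Q. (d \<circ> h) k * (d \<circ> h) l * \<psi> (m (h k) (i (h l))))
        = (\<Sum>k<card Q. \<Sum>l\<in>Q. d (h k) * d l * \<psi> (m (h k) (i l)))"
      by (rule sum.cong[OF refl]) (simp add: reidx[of "\<lambda>l. d (h _) * d l * \<psi> (m (h _) (i l))"])
    also have "\<dots> = (\<Sum>k\<in>Q. \<Sum>l\<in>Q. d k * d l * \<psi> (m k (i l)))"
      by (rule reidx)
    finally show ?thesis .
  qed
  ultimately show ?thesis by simp
qed

lemma psi_nonneg: "0 \<le> \<psi> g"
proof -
  let ?x = "s g"
  define \<gamma> where "\<gamma> k = (if k = (0::nat) then ?x else g)" for k
  define c where "c k = (if k = (0::nat) then 1 else -1::real)" for k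
  have "(\<Sum>k<2. \<Sum>l<2. c k * c l * \<psi> (m (\<gamma> k) (i (\<gamma> l)))) \<le> 0"
    by (intro cnd) (auto simp: s_in \<gamma>_def c_def unit_s numeral_2_eq_2)
  moreover have "m (s g) (s g) = s g" using m_s[of "s g"] unit_s[OF s_in] by simp
  moreover have "(\<Sum>k<2. \<Sum>l<2. c k * c l * \<psi> (m (\<gamma> k) (i (\<gamma> l)))) = - 2 * \<psi> g"
    using calculation(2) by (simp add: m_s numeral_2_eq_2 \<gamma>_def c_def m_unit_right m_unit_left psi_i psi_unit s_in i_unit m_i r_in)
  ultimately show ?thesis by simp
qed


lemma quad_expand:
  fixes M :: "'a \<Rightarrow> 'a \<Rightarrow> real"
  assumes "finite Q" "x \<in> Q"
  shows "(\<Sum>k\<in>Q. \<Sum>l\<in>Q. (e k - S * (if k = x then 1 else 0)) * (e l - S * (if l = x then 1 else 0)) * M k l)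
    = (\<Sum>k\<in>Q. \<Sum>l\<in>Q. e k * e l * M k l) - S * (\<Sum>l\<in>Q. e l * M x l) - S * (\<Sum>k\<in>Q. e k * M k x)
      + S * S * M x x"
proof -
  have "(\<Sum>k\<in>Q. \<Sum>l\<in>Q. (e k - S * (if k = x then 1 else 0)) * (e l - S * (if l = x then 1 else 0)) * M k l)
     = (\<Sum>k\<in>Q. (\<Sum>l\<in>Q. e k * e l * M k l) - S * e k * M k x
          - S * (if k = x then 1 else 0) * (\<Sum>l\<in>Q. e l * M k l) + S * S * (if k = x then 1 else 0) * M k x)"
  proof (rule sum.cong[OF refl])
    fix k assume "k \<in> Q"
    have "(\<Sum>l\<in>Q. (e k - S * (if k = x then 1 else 0)) * (e l - S * (if l = x then 1 else 0)) * M k l)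
      = (\<Sum>l\<in>Q. e k * e l * M k l - S * (if k = x then 1 else 0) * (e l * M k l)
          - S * e k * ((if l = x then 1 else 0) * M k l) + S * S * (if k = x then 1 else 0) * ((if l = x then 1 else 0) * M k l))"
      by (rule sum.cong[OF refl]) (simp add: algebra_simps)
    also have "\<dots> = (\<Sum>l\<in>Q. e k * e l * M k l) - S * (if k = x then 1 else 0) * (\<Sum>l\<in>Q. e l * M k l)
          - S * e k * M k x + S * S * (if k = x then 1 else 0) * M k x"
      using assms by (simp add: sum.distrib sum_subtractf sum_distrib_left[symmetric] delta_sum)
    finally show "(\<Sum>l\<in>Q. (e k - S * (if k = x then 1 else 0)) * (e l - S * (if l = x then 1 else 0)) * M k l)
     = (\<Sum>l\<in>Q. e k * e l * M k l) - S * e k * M k x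
          - S * (if k = x then 1 else 0) * (\<Sum>l\<in>Q. e l * M k l) + S * S * (if k = x then 1 else 0) * M k x"
      by simp
  qed
  also have "\<dots> = (\<Sum>k\<in>Q. \<Sum>l\<in>Q. e k * e l * M k l) - S * (\<Sum>k\<in>Q. e k * M k x)
       - S * (\<Sum>k\<in>Q. (if k = x then 1 else 0) * (\<Sum>l\<in>Q. e l * M k l)) + S * S * (\<Sum>k\<in>Q. (if k = x then 1 else 0) * M k x)"
    by (simp add: sum.distrib sum_subtractf sum_distrib_left mult.assoc)
  also have "\<dots> = (\<Sum>k\<in>Q. \<Sum>l\<in>Q. e k * e l * M k l) - S * (\<Sum>k\<in>Q. e k * M k x)
       - S * (\<Sum>l\<in>Q. e l * M x l) + S * S * M x x"
    using assms by (simp only: delta_sum)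
  finally show ?thesis by simp
qed

lemma sum_restrict_if:
  fixes F :: "'a \<Rightarrow> real"
  assumes "finite Q" "P \<subseteq> Q"
  shows "(\<Sum>l\<in>Q. (if l \<in> P then c l else 0) * F l) = (\<Sum>l\<in>P. c l * F l)"
proof -
  have "(\<Sum>l\<in>Q. (if l \<in> P then c l else 0) * F l) = (\<Sum>l\<in>Q. (if l \<in> P then c l * F l else 0))"
    by (rule sum.cong) auto
  also have "\<dots> = (\<Sum>l\<in>Q \<inter> P. c l * F l)" using assms(1) by (simp add: sum.inter_restrict)
  also have "Q \<inter> P = P" using assms(2) by auto
  finally show ?thesis .
qed


lemma B_psd:
  assumes x: "x \<in> U" and P: "finite P" "P \<subseteq> {\<gamma>. s \<gamma> = x}"
  shows "psd P (\<lambda>k l. \<psi> k + \<psi> l - \<psi> (m k (i l)))"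
  unfolding psd_def
proof
  fix c :: "'a \<Rightarrow> real"
  define S where "S = (\<Sum>k\<in>P. c k)"
  define Q where "Q = insert x P"
  define e where "e k = (if k \<in> P then c k else 0)" for k
  define d where "d k = e k - S * (if k = x then 1 else 0)" for k
  have Q: "finite Q" "x \<in> Q" "P \<subseteq> Q" "Q \<subseteq> {\<gamma>. s \<gamma> = x}"
    using P x by (auto simp: Q_def unit_s)
  have "(\<Sum>k\<in>Q. d k) = (\<Sum>k\<in>Q. e k * 1) - S * (\<Sum>k\<in>Q. (if k = x then 1 else 0) * 1)"
    unfolding d_def by (simp add: sum_subtractf sum_distrib_left)
  also have "\<dots> = 0" unfolding e_def using Q by (simp only: sum_restrict_if delta_sum) (simp add: S_def)
  finally have "(\<Sum>k\<in>Q. \<Sum>l\<in>Q. d k * d l * \<psi> (m k (i l))) \<le> 0"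
    using cnd_set[OF x Q(1) Q(4)] by blast
  also have "(\<Sum>k\<in>Q. \<Sum>l\<in>Q. d k * d l * \<psi> (m k (i l))) =
      (\<Sum>k\<in>Q. \<Sum>l\<in>Q. e k * e l * \<psi> (m k (i l))) - S * (\<Sum>l\<in>Q. e l * \<psi> (m x (i l)))
      - S * (\<Sum>k\<in>Q. e k * \<psi> (m k (i x))) + S * S * \<psi> (m x (i x))"
    unfolding d_def by (rule quad_expand[OF Q(1,2)])
  also have "(\<Sum>k\<in>Q. \<Sum>l\<in>Q. e k * e l * \<psi> (m k (i l))) = (\<Sum>k\<in>P. \<Sum>l\<in>P. c k * c l * \<psi> (m k (i l)))"
  proof -
    have "(\<Sum>k\<in>Q. \<Sum>l\<in>Q. e k * e l * \<psi> (m k (i l))) = (\<Sum>k\<in>Q. e k * (\<Sum>l\<in>Q. e l * \<psi> (m k (i l))))"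
      by (simp add: sum_distrib_left mult.assoc)
    also have "\<dots> = (\<Sum>k\<in>P. c k * (\<Sum>l\<in>P. c l * \<psi> (m k (i l))))"
      unfolding e_def using Q by (simp only: sum_restrict_if)
    finally show ?thesis by (simp add: sum_distrib_left mult.assoc)
  qed
  also have "(\<Sum>l\<in>Q. e l * \<psi> (m x (i l))) = (\<Sum>l\<in>P. c l * \<psi> l)"
  proof -
    have "(\<Sum>l\<in>Q. e l * \<psi> (m x (i l))) = (\<Sum>l\<in>P. c l * \<psi> (m x (i l)))"
      unfolding e_def using Q by (simp only: sum_restrict_if)
    also have "\<dots> = (\<Sum>l\<in>P. c l * \<psi> l)"
      using P by (intro sum.cong refl) (auto simp: m_unit_left psi_i)
    finally show ?thesis .
  qed
  also have "(\<Sum>k\<in>Q. e k * \<psi> (m k (i x))) = (\<Sum>l\<in>P. c l * \<psi> l)"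
  proof -
    have "(\<Sum>k\<in>Q. e k * \<psi> (m k (i x))) = (\<Sum>k\<in>P. c k * \<psi> (m k (i x)))"
      unfolding e_def using Q by (simp only: sum_restrict_if)
    also have "\<dots> = (\<Sum>l\<in>P. c l * \<psi> l)"
      using P by (intro sum.cong refl) (auto simp: m_unit_right)
    finally show ?thesis .
  qed
  also have "\<psi> (m x (i x)) = 0" using x m_unit_right[of x x] unit_s[OF x] psi_unit[OF x] by simp
  finally have A: "(\<Sum>k\<in>P. \<Sum>l\<in>P. c k * c l * \<psi> (m k (i l))) - 2 * S * (\<Sum>l\<in>P. c l * \<psi> l) \<le> 0"
    by simp
  have "(\<Sum>k\<in>P. \<Sum>l\<in>P. c k * c l * (\<psi> k + \<psi> l - \<psi> (m k (i l)))) =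
     (\<Sum>k\<in>P. \<Sum>l\<in>P. c k * \<psi> k * c l) + (\<Sum>k\<in>P. \<Sum>l\<in>P. c k * (c l * \<psi> l)) - (\<Sum>k\<in>P. \<Sum>l\<in>P. c k * c l * \<psi> (m k (i l)))"
    by (simp add: algebra_simps sum.distrib sum_subtractf)
  also have "(\<Sum>k\<in>P. \<Sum>l\<in>P. c k * \<psi> k * c l) = (\<Sum>k\<in>P. c k * \<psi> k) * S"
    by (simp add: sum_product S_def)
  also have "(\<Sum>k\<in>P. \<Sum>l\<in>P. c k * (c l * \<psi> l)) = S * (\<Sum>l\<in>P. c l * \<psi> l)"
    by (simp add: sum_product S_def)
  finally show "0 \<le> (\<Sum>k\<in>P. \<Sum>l\<in>P. c k * c l * (\<psi> k + \<psi> l - \<psi> (m k (i l))))"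
    using A by simp
qed

lemma psi_sym: "s k = s l \<Longrightarrow> \<psi> (m k (i l)) = \<psi> (m l (i k))"
  by (metis inv_prod psi_i)

lemma kern_psd:
  assumes x: "x \<in> U" and P: "finite P" "P \<subseteq> {\<gamma>. s \<gamma> = x}" and t: "0 \<le> t"
  shows "psd P (\<lambda>k l. exp (- t * \<psi> (m k (i l))))" "symm P (\<lambda>k l. exp (- t * \<psi> (m k (i l))))"
proof -
  have sy: "symm P (\<lambda>k l. t * (\<psi> k + \<psi> l - \<psi> (m k (i l))))"
    using P psi_sym unfolding symm_def by auto
  have "psd P (\<lambda>k l. exp (- t * \<psi> k) * exp (- t * \<psi> l) * exp (t * (\<psi> k + \<psi> l - \<psi> (m k (i l)))))"
    by (rule psd_diag_scale[OF psd_exp[OF P(1) psd_scale[OF B_psd[OF x P] t] sy]])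
  moreover have "(\<lambda>k l. exp (- t * \<psi> k) * exp (- t * \<psi> l) * exp (t * (\<psi> k + \<psi> l - \<psi> (m k (i l)))))
     = (\<lambda>k l. exp (- t * \<psi> (m k (i l))))"
    by (intro ext) (simp add: exp_add[symmetric] algebra_simps)
  ultimately show "psd P (\<lambda>k l. exp (- t * \<psi> (m k (i l))))" by simp
  show "symm P (\<lambda>k l. exp (- t * \<psi> (m k (i l))))"
    using P psi_sym unfolding symm_def by auto
qed

end


context tw begin

definition adm :: "'g \<Rightarrow> ('g \<Rightarrow> complex) \<Rightarrow> bool" where
  "adm x \<xi> \<longleftrightarrow> x \<in> G0 \<and> finite {\<eta>. \<xi> \<eta> \<noteq> 0} \<and> (\<forall>\<eta>. \<xi> \<eta> \<noteq> 0 \<longrightarrow> s \<eta> = x) \<and>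
                       (\<Sum>\<eta>\<in>{\<eta>. \<xi> \<eta> \<noteq> 0}. (cmod (\<xi> \<eta>))\<^sup>2) \<le> 1"

definition Ev :: "('s \<Rightarrow> complex) \<Rightarrow> ('g \<Rightarrow> complex) \<Rightarrow> 'g set \<Rightarrow> real" where
  "Ev h \<xi> F = sqrt (\<Sum>\<gamma>\<in>F. (cmod (regrep mS iS p h \<xi> \<gamma>))\<^sup>2)"

lemma rnorm_ge:
  assumes "adm x \<xi>" "finite F" "F \<subseteq> {\<gamma>. s \<gamma> = x}"
  shows "ereal (Ev h \<xi> F) \<le> rnorm G0 s mS iS p h"
proof -
  have "ereal (Ev h \<xi> F) \<le> l2n {\<gamma>. s \<gamma> = x} (regrep mS iS p h \<xi>)"
    unfolding l2n_def Ev_def using assms(2,3) by (intro SUP_upper) auto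
  also have "\<dots> \<le> rnorm G0 s mS iS p h"
    unfolding rnorm_def
    using assms(1) unfolding adm_def
    by (intro SUP_upper2[where i="(x, \<xi>)"]) auto
  finally show ?thesis .
qed

lemma rnorm_le:
  assumes "\<And>x \<xi> F. adm x \<xi> \<Longrightarrow> finite F \<Longrightarrow> F \<subseteq> {\<gamma>. s \<gamma> = x} \<Longrightarrow> ereal (Ev h \<xi> F) \<le> B"
  shows "rnorm G0 s mS iS p h \<le> B"
  unfolding rnorm_def
proof (rule SUP_least)
  fix y assume "y \<in> {(x, \<xi>). x \<in> G0 \<and> finite {\<eta>. \<xi> \<eta> \<noteq> 0} \<and> (\<forall>\<eta>. \<xi> \<eta> \<noteq> 0 \<longrightarrow> s \<eta> = x) \<and>
                       (\<Sum>\<eta>\<in>{\<eta>. \<xi> \<eta> \<noteq> 0}. (cmod (\<xi> \<eta>))\<^sup>2) \<le> 1}"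
  then obtain x \<xi> where y: "y = (x, \<xi>)" and a: "adm x \<xi>" unfolding adm_def by auto
  show "(case y of (x, \<xi>) \<Rightarrow> l2n {\<gamma>. s \<gamma> = x} (regrep mS iS p h \<xi>)) \<le> B"
    unfolding y l2n_def using assms[OF a] by (auto intro!: SUP_least simp: Ev_def)
qed

lemma Ev_nonneg: "0 \<le> Ev h \<xi> F"
  unfolding Ev_def by (simp add: sum_nonneg)

lemma adm_delta: "x \<in> G0 \<Longrightarrow> adm x (\<lambda>\<eta>. if \<eta> = x then 1 else 0)"
  unfolding adm_def by (auto simp: G.unit_s)

lemma rnorm_nonneg: "0 \<le> rnorm G0 s mS iS p h"
proof -
  have "ereal (Ev h (\<lambda>\<eta>. if \<eta> = s g then 1 else 0) {}) \<le> rnorm G0 s mS iS p h" for g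
    by (rule rnorm_ge[OF adm_delta]) (auto simp: G.s_in)
  then have "ereal 0 \<le> rnorm G0 s mS iS p h" by (simp add: Ev_def)
  then show ?thesis by (simp add: zero_ereal_def)
qed

lemma Ev_le_real: "rnorm G0 s mS iS p h \<le> ereal R \<Longrightarrow> adm x \<xi> \<Longrightarrow> finite F \<Longrightarrow> F \<subseteq> {\<gamma>. s \<gamma> = x}
   \<Longrightarrow> Ev h \<xi> F \<le> R"
  using rnorm_ge[of x \<xi> F h] by (metis ereal_less_eq(3) order_trans)

lemma R_nonneg: "rnorm G0 s mS iS p h \<le> ereal R \<Longrightarrow> 0 \<le> R"
  using rnorm_nonneg[of h] by (metis ereal_less_eq(5) order_trans zero_ereal_def)

lemma regrep_superset:
  assumes "finite E" "{\<eta>. \<xi> \<eta> \<noteq> 0} \<subseteq> E"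
  shows "regrep mS iS p h \<xi> \<gamma> = (\<Sum>\<eta>\<in>E. h (mS (lift p \<gamma>) (iS (lift p \<eta>))) * \<xi> \<eta>)"
  unfolding regrep_def using assms by (intro sum.mono_neutral_left) auto

lemma entry_mod: "is_section r mS p iota h \<Longrightarrow> s \<gamma> = s \<eta> \<Longrightarrow>
   cmod (h (mS (lift p \<gamma>) (iS (lift p \<eta>)))) = cmod (h (lift p (m \<gamma> (i \<eta>))))"
proof -
  assume a: "is_section r mS p iota h" "s \<gamma> = s \<eta>"
  have "p (mS (lift p \<gamma>) (iS (lift p \<eta>))) = p (lift p (m \<gamma> (i \<eta>)))"
    by (simp only: p_lift regrep_p[OF a(2)])
  then show ?thesis by (rule section_mod[OF a(1)])
qed


lemma regrep_add: "regrep mS iS p (\<lambda>\<sigma>. a \<sigma> + b \<sigma>) \<xi> \<gamma> = regrep mS iS p a \<xi> \<gamma> + regrep mS iS p b \<xi> \<gamma>"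
  unfolding regrep_def by (simp add: distrib_right sum.distrib)

lemma Ev_add: "Ev (\<lambda>\<sigma>. a \<sigma> + b \<sigma>) \<xi> F \<le> Ev a \<xi> F + Ev b \<xi> F"
proof -
  have "Ev (\<lambda>\<sigma>. a \<sigma> + b \<sigma>) \<xi> F = L2_set (\<lambda>\<gamma>. cmod (regrep mS iS p a \<xi> \<gamma> + regrep mS iS p b \<xi> \<gamma>)) F"
    unfolding Ev_def L2_set_def regrep_add ..
  also have "\<dots> \<le> L2_set (\<lambda>\<gamma>. cmod (regrep mS iS p a \<xi> \<gamma>) + cmod (regrep mS iS p b \<xi> \<gamma>)) F"
    by (intro L2_set_mono norm_triangle_ineq) auto
  also have "\<dots> \<le> L2_set (\<lambda>\<gamma>. cmod (regrep mS iS p a \<xi> \<gamma>)) F + L2_set (\<lambda>\<gamma>. cmod (regrep mS iS p b \<xi> \<gamma>)) F"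
    by (rule L2_set_triangle_ineq)
  finally show ?thesis unfolding Ev_def L2_set_def by simp
qed

lemma rnorm_add: "rnorm G0 s mS iS p (\<lambda>\<sigma>. a \<sigma> + b \<sigma>) \<le> rnorm G0 s mS iS p a + rnorm G0 s mS iS p b"
proof (rule rnorm_le)
  fix x \<xi> F assume *: "adm x \<xi>" "finite F" "F \<subseteq> {\<gamma>. s \<gamma> = x}"
  have "ereal (Ev (\<lambda>\<sigma>. a \<sigma> + b \<sigma>) \<xi> F) \<le> ereal (Ev a \<xi> F) + ereal (Ev b \<xi> F)"
    using Ev_add by simp
  also have "\<dots> \<le> rnorm G0 s mS iS p a + rnorm G0 s mS iS p b"
    by (intro add_mono rnorm_ge[OF *])
  finally show "ereal (Ev (\<lambda>\<sigma>. a \<sigma> + b \<sigma>) \<xi> F) \<le> rnorm G0 s mS iS p a + rnorm G0 s mS iS p b" .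
qed

lemma rnorm_uminus: "rnorm G0 s mS iS p (\<lambda>\<sigma>. - h \<sigma>) = rnorm G0 s mS iS p h"
proof -
  have "regrep mS iS p (\<lambda>\<sigma>. - h \<sigma>) \<xi> \<gamma> = - regrep mS iS p h \<xi> \<gamma>" for \<xi> \<gamma>
    unfolding regrep_def by (simp add: sum_negf)
  then show ?thesis unfolding rnorm_def l2n_def by simp
qed

lemma rnorm_diff_commute: "rnorm G0 s mS iS p (\<lambda>\<sigma>. a \<sigma> - b \<sigma>) = rnorm G0 s mS iS p (\<lambda>\<sigma>. b \<sigma> - a \<sigma>)"
  using rnorm_uminus[of "\<lambda>\<sigma>. b \<sigma> - a \<sigma>"] by simp

lemma Ev_homog:
  assumes R: "rnorm G0 s mS iS p h \<le> ereal R" and x: "x \<in> G0"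
    and \<zeta>: "finite {\<eta>. \<zeta> \<eta> \<noteq> 0}" "\<forall>\<eta>. \<zeta> \<eta> \<noteq> 0 \<longrightarrow> s \<eta> = x"
    and F: "finite F" "F \<subseteq> {\<gamma>. s \<gamma> = x}"
  shows "(\<Sum>\<gamma>\<in>F. (cmod (regrep mS iS p h \<zeta> \<gamma>))\<^sup>2) \<le> R\<^sup>2 * (\<Sum>\<eta>\<in>{\<eta>. \<zeta> \<eta> \<noteq> 0}. (cmod (\<zeta> \<eta>))\<^sup>2)"
proof (cases "{\<eta>. \<zeta> \<eta> \<noteq> 0} = {}")
  case True
  then show ?thesis by (simp add: regrep_def)
next
  case False
  define N where "N = (\<Sum>\<eta>\<in>{\<eta>. \<zeta> \<eta> \<noteq> 0}. (cmod (\<zeta> \<eta>))\<^sup>2)"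
  have Npos: "0 < N" unfolding N_def using False \<zeta>(1)
    by (intro sum_pos) auto
  define \<xi> where "\<xi> \<eta> = \<zeta> \<eta> / complex_of_real (sqrt N)" for \<eta>
  have supp: "{\<eta>. \<xi> \<eta> \<noteq> 0} = {\<eta>. \<zeta> \<eta> \<noteq> 0}" using Npos by (auto simp: \<xi>_def)
  have "(\<Sum>\<eta>\<in>{\<eta>. \<xi> \<eta> \<noteq> 0}. (cmod (\<xi> \<eta>))\<^sup>2) = (\<Sum>\<eta>\<in>{\<eta>. \<zeta> \<eta> \<noteq> 0}. (cmod (\<zeta> \<eta>))\<^sup>2 / N)"
    unfolding supp using Npos by (intro sum.cong refl) (simp add: \<xi>_def norm_divide power_divide)
  also have "\<dots> = 1" using Npos by (simp add: sum_divide_distrib[symmetric] N_def)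
  finally have "adm x \<xi>" unfolding adm_def using x \<zeta> supp by auto
  then have "Ev h \<xi> F \<le> R" using Ev_le_real[OF R _ F] by blast
  then have "(Ev h \<xi> F)\<^sup>2 \<le> R\<^sup>2" using Ev_nonneg by (intro power_mono) auto
  moreover have "(Ev h \<xi> F)\<^sup>2 = (\<Sum>\<gamma>\<in>F. (cmod (regrep mS iS p h \<zeta> \<gamma>))\<^sup>2) / N"
  proof -
    have "regrep mS iS p h \<xi> \<gamma> = regrep mS iS p h \<zeta> \<gamma> / complex_of_real (sqrt N)" for \<gamma>
      unfolding regrep_def supp by (simp add: \<xi>_def sum_divide_distrib)
    then show ?thesis unfolding Ev_def using Npos
      by (simp add: sum_nonneg norm_divide power_divide sum_divide_distrib)
  qed
  ultimately show ?thesis using Npos by (simp add: N_def divide_le_eq mult.commute)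
qed

lemma col_bound:
  assumes h: "is_section r mS p iota h" and R: "rnorm G0 s mS iS p h \<le> ereal R"
    and x: "x \<in> G0" and F: "finite F" "F \<subseteq> {\<gamma>. s \<gamma> = x}"
  shows "(\<Sum>\<gamma>\<in>F. (cmod (h (lift p \<gamma>)))\<^sup>2) \<le> R\<^sup>2"
proof -
  let ?\<xi> = "\<lambda>\<eta>. if \<eta> = x then 1 else (0::complex)"
  have "Ev h ?\<xi> F \<le> R" by (rule Ev_le_real[OF R adm_delta[OF x] F])
  then have "(Ev h ?\<xi> F)\<^sup>2 \<le> R\<^sup>2" using Ev_nonneg by (intro power_mono) auto
  moreover have "(Ev h ?\<xi> F)\<^sup>2 = (\<Sum>\<gamma>\<in>F. (cmod (h (lift p \<gamma>)))\<^sup>2)"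
  proof -
    have "{\<eta>. ?\<xi> \<eta> \<noteq> 0} = {x}" by auto
    then have "regrep mS iS p h ?\<xi> \<gamma> = h (mS (lift p \<gamma>) (iS (lift p x)))" for \<gamma>
      unfolding regrep_def by simp
    moreover have "cmod (h (mS (lift p \<gamma>) (iS (lift p x)))) = cmod (h (lift p \<gamma>))" if "\<gamma> \<in> F" for \<gamma>
    proof -
      have "s \<gamma> = s x" using that F x by (auto simp: G.unit_s)
      then have "cmod (h (mS (lift p \<gamma>) (iS (lift p x)))) = cmod (h (lift p (m \<gamma> (i x))))"
        by (rule entry_mod[OF h])
      also have "m \<gamma> (i x) = \<gamma>" using that F by (auto intro: G.m_unit_right)
      finally show ?thesis .
    qed
    ultimately show ?thesis unfolding Ev_def by (simp add: sum_nonneg)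
  qed
  ultimately show ?thesis by simp
qed

lemma pt_bound:
  assumes h: "is_section r mS p iota h" and R: "rnorm G0 s mS iS p h \<le> ereal R"
  shows "cmod (h \<sigma>) \<le> R"
proof -
  have "(\<Sum>\<gamma>\<in>{p \<sigma>}. (cmod (h (lift p \<gamma>)))\<^sup>2) \<le> R\<^sup>2"
    by (rule col_bound[OF h R G.s_in]) auto
  then have "(cmod (h \<sigma>))\<^sup>2 \<le> R\<^sup>2" using section_mod_lift[OF h] by simp
  then show ?thesis using R_nonneg[OF R] by (simp add: abs_le_square_iff[symmetric] power2_le_iff_abs_le)
qed


lemma row_bound:
  assumes h: "is_section r mS p iota h" and R: "rnorm G0 s mS iS p h \<le> ereal R"
    and x: "x \<in> G0" and F: "finite F" "F \<subseteq> {\<gamma>. r \<gamma> = x}"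
  shows "(\<Sum>\<gamma>\<in>F. (cmod (h (lift p \<gamma>)))\<^sup>2) \<le> R\<^sup>2"
proof -
  define E where "E = i ` F"
  define a where "a \<eta> = h (mS (lift p x) (iS (lift p \<eta>)))" for \<eta>
  define \<zeta> where "\<zeta> \<eta> = (if \<eta> \<in> E then cnj (a \<eta>) else 0)" for \<eta>
  have E: "finite E" "E \<subseteq> {\<eta>. s \<eta> = x}" using F by (auto simp: E_def G.s_i)
  have supp: "{\<eta>. \<zeta> \<eta> \<noteq> 0} \<subseteq> E" by (auto simp: \<zeta>_def)
  have fin: "finite {\<eta>. \<zeta> \<eta> \<noteq> 0}" using finite_subset[OF supp E(1)] .
  have sx: "\<forall>\<eta>. \<zeta> \<eta> \<noteq> 0 \<longrightarrow> s \<eta> = x" using supp E(2) by auto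
  define T where "T = (\<Sum>\<eta>\<in>E. (cmod (a \<eta>))\<^sup>2)"
  have T0: "0 \<le> T" unfolding T_def by (simp add: sum_nonneg)
  have "(\<Sum>\<eta>\<in>{\<eta>. \<zeta> \<eta> \<noteq> 0}. (cmod (\<zeta> \<eta>))\<^sup>2) = (\<Sum>\<eta>\<in>E. (cmod (\<zeta> \<eta>))\<^sup>2)"
    using supp E(1) by (intro sum.mono_neutral_left) auto
  also have "\<dots> = T" unfolding T_def \<zeta>_def by (intro sum.cong) auto
  finally have nz: "(\<Sum>\<eta>\<in>{\<eta>. \<zeta> \<eta> \<noteq> 0}. (cmod (\<zeta> \<eta>))\<^sup>2) = T" .
  have "regrep mS iS p h \<zeta> x = (\<Sum>\<eta>\<in>E. a \<eta> * \<zeta> \<eta>)"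
    unfolding a_def by (rule regrep_superset[OF E(1) supp])
  also have "\<dots> = (\<Sum>\<eta>\<in>E. complex_of_real ((cmod (a \<eta>))\<^sup>2))"
    by (intro sum.cong refl) (simp only: \<zeta>_def if_True complex_norm_square)
  also have "\<dots> = complex_of_real T" unfolding T_def by simp
  finally have rx: "regrep mS iS p h \<zeta> x = complex_of_real T" .
  have "(\<Sum>\<gamma>\<in>{x}. (cmod (regrep mS iS p h \<zeta> \<gamma>))\<^sup>2) \<le> R\<^sup>2 * (\<Sum>\<eta>\<in>{\<eta>. \<zeta> \<eta> \<noteq> 0}. (cmod (\<zeta> \<eta>))\<^sup>2)"
    by (rule Ev_homog[OF R x fin sx]) (use x in \<open>auto simp: G.unit_s\<close>)
  then have "T * T \<le> R\<^sup>2 * T" using rx nz T0 by (simp add: power2_eq_square)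
  then have TR: "T \<le> R\<^sup>2" using T0 by (cases "T = 0") (auto simp: mult_le_cancel_right)
  have "T = (\<Sum>\<gamma>\<in>F. (cmod (a (i \<gamma>)))\<^sup>2)"
  proof -
    have "inj_on i F" by (rule inj_on_inverseI[where g=i]) (simp add: G.i_i)
    then show ?thesis unfolding T_def E_def by (simp add: sum.reindex)
  qed
  also have "\<dots> = (\<Sum>\<gamma>\<in>F. (cmod (h (lift p \<gamma>)))\<^sup>2)"
  proof (intro sum.cong refl)
    fix \<gamma> assume g: "\<gamma> \<in> F"
    have "s x = s (i \<gamma>)" using g F x by (auto simp: G.unit_s G.s_i)
    then have "cmod (a (i \<gamma>)) = cmod (h (lift p (m x (i (i \<gamma>)))))"
      unfolding a_def by (rule entry_mod[OF h])
    also have "m x (i (i \<gamma>)) = \<gamma>" using g F by (auto simp: G.i_i G.m_r)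
    finally show "(cmod (a (i \<gamma>)))\<^sup>2 = (cmod (h (lift p \<gamma>)))\<^sup>2" by simp
  qed
  finally show ?thesis using TR by simp
qed

end


locale twp = tw G0 r s i m S0 rS sS iS mS p iota + P: gpsi G0 r s m i \<psi>
  for G0 :: "'g::t2_space set" and r s i m and S0 :: "'s::topological_space set" and rS sS iS mS p iota
    and \<psi> :: "'g \<Rightarrow> real"
begin

lemma rnorm_real:
  assumes "rnorm G0 s mS iS p h \<noteq> \<infinity>"
  obtains R where "rnorm G0 s mS iS p h = ereal R" "0 \<le> R"
proof -
  have nn: "0 \<le> rnorm G0 s mS iS p h" by (rule rnorm_nonneg)
  then obtain R where e: "rnorm G0 s mS iS p h = ereal R" using assms
    by (cases "rnorm G0 s mS iS p h") auto
  then have "0 \<le> R" using nn by simp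
  then show ?thesis using that e by blast
qed

lemma contract:
  assumes t: "0 \<le> t"
  shows "rnorm G0 s mS iS p (\<lambda>\<sigma>. complex_of_real (exp (- t * \<psi> (p \<sigma>))) * h \<sigma>) \<le> rnorm G0 s mS iS p h"
proof (cases "rnorm G0 s mS iS p h = \<infinity>")
  case True then show ?thesis by simp
next
  case False
  then obtain R where R: "rnorm G0 s mS iS p h = ereal R" "0 \<le> R" by (rule rnorm_real)
  have Rle: "rnorm G0 s mS iS p h \<le> ereal R" using R by simp
  let ?kh = "\<lambda>\<sigma>. complex_of_real (exp (- t * \<psi> (p \<sigma>))) * h \<sigma>"
  show ?thesis unfolding R(1)
  proof (rule rnorm_le)
    fix x \<xi> F assume a: "adm x \<xi>" and F: "finite F" "F \<subseteq> {\<gamma>. s \<gamma> = x}"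
    define E where "E = {\<eta>. \<xi> \<eta> \<noteq> 0}"
    have x: "x \<in> G0" and E: "finite E" "E \<subseteq> {\<eta>. s \<eta> = x}" and nrm: "(\<Sum>\<eta>\<in>E. (cmod (\<xi> \<eta>))\<^sup>2) \<le> 1"
      using a unfolding adm_def E_def by auto
    define Q where "Q = F \<union> E"
    have Q: "finite Q" "Q \<subseteq> {\<gamma>. s \<gamma> = x}" using F E by (auto simp: Q_def)
    obtain n :: nat and V where V: "\<forall>k\<in>Q. \<forall>l\<in>Q. exp (- t * \<psi> (m k (i l))) = (\<Sum>j<n. V k j * V l j)"
      using gram[OF Q(1) P.kern_psd[OF x Q t]] by blast
    have diag: "(\<Sum>j<n. (V k j)\<^sup>2) = 1" if "k \<in> Q" for k
    proof -
      have "(\<Sum>j<n. (V k j)\<^sup>2) = exp (- t * \<psi> (m k (i k)))" using V that by (simp add: power2_eq_square)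
      also have "m k (i k) = r k" by (rule G.m_i)
      finally show ?thesis by (simp add: P.psi_unit G.r_in)
    qed
    define A where "A \<gamma> \<eta> = h (mS (lift p \<gamma>) (iS (lift p \<eta>)))" for \<gamma> \<eta>
    define \<zeta> where "\<zeta> j \<eta> = complex_of_real (V \<eta> j) * \<xi> \<eta>" for j \<eta>
    have \<zeta>supp: "{\<eta>. \<zeta> j \<eta> \<noteq> 0} \<subseteq> E" for j by (auto simp: \<zeta>_def E_def)
    have w: "regrep mS iS p h (\<zeta> j) \<gamma> = (\<Sum>\<eta>\<in>E. A \<gamma> \<eta> * \<zeta> j \<eta>)" for j \<gamma>
      unfolding A_def by (rule regrep_superset[OF E(1) \<zeta>supp])
    have main: "regrep mS iS p ?kh \<xi> \<gamma> = (\<Sum>j<n. complex_of_real (V \<gamma> j) * regrep mS iS p h (\<zeta> j) \<gamma>)"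
      if g: "\<gamma> \<in> F" for \<gamma>
    proof -
      have "regrep mS iS p ?kh \<xi> \<gamma> = (\<Sum>\<eta>\<in>E. complex_of_real (exp (- t * \<psi> (m \<gamma> (i \<eta>)))) * A \<gamma> \<eta> * \<xi> \<eta>)"
        unfolding regrep_def E_def A_def
      proof (intro sum.cong refl)
        fix \<eta> assume "\<eta> \<in> {\<eta>. \<xi> \<eta> \<noteq> 0}"
        then have "s \<gamma> = s \<eta>" using g F E by (auto simp: E_def)
        then show "?kh (mS (lift p \<gamma>) (iS (lift p \<eta>))) * \<xi> \<eta> =
           complex_of_real (exp (- t * \<psi> (m \<gamma> (i \<eta>)))) * h (mS (lift p \<gamma>) (iS (lift p \<eta>))) * \<xi> \<eta>"
          by (simp add: regrep_p)
      qed
      also have "\<dots> = (\<Sum>\<eta>\<in>E. \<Sum>j<n. complex_of_real (V \<gamma> j) * (A \<gamma> \<eta> * \<zeta> j \<eta>))"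
      proof (intro sum.cong refl)
        fix \<eta> assume "\<eta> \<in> E"
        then have "exp (- t * \<psi> (m \<gamma> (i \<eta>))) = (\<Sum>j<n. V \<gamma> j * V \<eta> j)"
          using V g by (auto simp: Q_def)
        then show "complex_of_real (exp (- t * \<psi> (m \<gamma> (i \<eta>)))) * A \<gamma> \<eta> * \<xi> \<eta> =
            (\<Sum>j<n. complex_of_real (V \<gamma> j) * (A \<gamma> \<eta> * \<zeta> j \<eta>))"
          by (simp add: \<zeta>_def sum_distrib_left sum_distrib_right mult_ac)
      qed
      also have "\<dots> = (\<Sum>j<n. complex_of_real (V \<gamma> j) * (\<Sum>\<eta>\<in>E. A \<gamma> \<eta> * \<zeta> j \<eta>))"
        by (simp add: sum.swap[of _ E] sum_distrib_left)
      finally show ?thesis by (simp add: w)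
    qed
    have cs: "(cmod (regrep mS iS p ?kh \<xi> \<gamma>))\<^sup>2 \<le> (\<Sum>j<n. (cmod (regrep mS iS p h (\<zeta> j) \<gamma>))\<^sup>2)"
      if g: "\<gamma> \<in> F" for \<gamma>
    proof -
      have "cmod (regrep mS iS p ?kh \<xi> \<gamma>) \<le> (\<Sum>j<n. \<bar>V \<gamma> j\<bar> * cmod (regrep mS iS p h (\<zeta> j) \<gamma>))"
        unfolding main[OF g] by (rule order_trans[OF norm_sum]) (simp add: norm_mult)
      then have "(cmod (regrep mS iS p ?kh \<xi> \<gamma>))\<^sup>2 \<le> (\<Sum>j<n. \<bar>V \<gamma> j\<bar> * cmod (regrep mS iS p h (\<zeta> j) \<gamma>))\<^sup>2"
        by (intro power_mono) auto
      also have "\<dots> \<le> (\<Sum>j<n. \<bar>V \<gamma> j\<bar>\<^sup>2) * (\<Sum>j<n. (cmod (regrep mS iS p h (\<zeta> j) \<gamma>))\<^sup>2)"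
        by (rule Cauchy_Schwarz_ineq_sum)
      also have "(\<Sum>j<n. \<bar>V \<gamma> j\<bar>\<^sup>2) = 1" using diag[of \<gamma>] g by (simp add: Q_def)
      finally show ?thesis by simp
    qed
    have "(\<Sum>\<gamma>\<in>F. (cmod (regrep mS iS p ?kh \<xi> \<gamma>))\<^sup>2) \<le> (\<Sum>\<gamma>\<in>F. \<Sum>j<n. (cmod (regrep mS iS p h (\<zeta> j) \<gamma>))\<^sup>2)"
      by (rule sum_mono) (rule cs)
    also have "\<dots> = (\<Sum>j<n. \<Sum>\<gamma>\<in>F. (cmod (regrep mS iS p h (\<zeta> j) \<gamma>))\<^sup>2)" by (rule sum.swap)
    also have "\<dots> \<le> (\<Sum>j<n. R\<^sup>2 * (\<Sum>\<eta>\<in>{\<eta>. \<zeta> j \<eta> \<noteq> 0}. (cmod (\<zeta> j \<eta>))\<^sup>2))"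
    proof (rule sum_mono)
      fix j
      show "(\<Sum>\<gamma>\<in>F. (cmod (regrep mS iS p h (\<zeta> j) \<gamma>))\<^sup>2) \<le> R\<^sup>2 * (\<Sum>\<eta>\<in>{\<eta>. \<zeta> j \<eta> \<noteq> 0}. (cmod (\<zeta> j \<eta>))\<^sup>2)"
        using \<zeta>supp[of j] E finite_subset[OF \<zeta>supp[of j] E(1)]
        by (intro Ev_homog[OF Rle x _ _ F]) auto
    qed
    also have "\<dots> = (\<Sum>j<n. R\<^sup>2 * (\<Sum>\<eta>\<in>E. (V \<eta> j)\<^sup>2 * (cmod (\<xi> \<eta>))\<^sup>2))"
    proof (rule sum.cong[OF refl])
      fix j assume "j \<in> {..<n}"
      have "(\<Sum>\<eta>\<in>{\<eta>. \<zeta> j \<eta> \<noteq> 0}. (cmod (\<zeta> j \<eta>))\<^sup>2) = (\<Sum>\<eta>\<in>E. (cmod (\<zeta> j \<eta>))\<^sup>2)"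
        using \<zeta>supp[of j] E(1) by (intro sum.mono_neutral_left) auto
      also have "\<dots> = (\<Sum>\<eta>\<in>E. (V \<eta> j)\<^sup>2 * (cmod (\<xi> \<eta>))\<^sup>2)"
        by (simp add: \<zeta>_def norm_mult power_mult_distrib)
      finally show "R\<^sup>2 * (\<Sum>\<eta>\<in>{\<eta>. \<zeta> j \<eta> \<noteq> 0}. (cmod (\<zeta> j \<eta>))\<^sup>2) = R\<^sup>2 * (\<Sum>\<eta>\<in>E. (V \<eta> j)\<^sup>2 * (cmod (\<xi> \<eta>))\<^sup>2)" by simp
    qed
    also have "\<dots> = R\<^sup>2 * (\<Sum>\<eta>\<in>E. (\<Sum>j<n. (V \<eta> j)\<^sup>2) * (cmod (\<xi> \<eta>))\<^sup>2)"
      by (simp add: sum_distrib_left[symmetric] sum_distrib_right sum.swap[of _ E])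
    also have "\<dots> = R\<^sup>2 * (\<Sum>\<eta>\<in>E. (cmod (\<xi> \<eta>))\<^sup>2)"
      using diag by (simp add: Q_def)
    also have "\<dots> \<le> R\<^sup>2 * 1" using nrm by (intro mult_left_mono) auto
    finally have "(Ev ?kh \<xi> F)\<^sup>2 \<le> R\<^sup>2" unfolding Ev_def by (simp add: sum_nonneg)
    then have "Ev ?kh \<xi> F \<le> R" using R(2) Ev_nonneg by (simp add: power2_le_iff_abs_le)
    then show "ereal (Ev ?kh \<xi> F) \<le> ereal R" by simp
  qed
qed

end


lemma subsingleton_fiber:
  assumes "inj_on q W" shows "finite (W \<inter> {\<gamma>. q \<gamma> = x}) \<and> card (W \<inter> {\<gamma>. q \<gamma> = x}) \<le> 1"
proof (cases "W \<inter> {\<gamma>. q \<gamma> = x} = {}")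
  case True then show ?thesis by simp
next
  case False
  then obtain a where a: "a \<in> W" "q a = x" by auto
  have "W \<inter> {\<gamma>. q \<gamma> = x} \<subseteq> {a}" using assms a unfolding inj_on_def by auto
  then show ?thesis by (metis card.empty card.insert empty_iff finite.intros(1) finite_insert
        finite_subset card_mono le_refl subset_singletonD zero_le_one One_nat_def)
qed

lemma fiber_count_gen:
  fixes q :: "'a::topological_space \<Rightarrow> 'b"
  assumes loc: "\<forall>g. \<exists>V. open V \<and> g \<in> V \<and> inj_on q V" and C: "compact C"
  shows "\<exists>N. \<forall>x. finite (C \<inter> {\<gamma>. q \<gamma> = x}) \<and> card (C \<inter> {\<gamma>. q \<gamma> = x}) \<le> N"
proof -
  obtain W where W0: "\<forall>g. open (W g) \<and> g \<in> W g \<and> inj_on q (W g)"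
    using choice[OF loc] by blast
  have W: "\<And>g. open (W g) \<and> g \<in> W g \<and> inj_on q (W g)" by (rule W0[rule_format])
  obtain T where T: "T \<subseteq> C" "finite T" "C \<subseteq> (\<Union>c\<in>T. W c)"
    by (rule compactE_image[OF C, of C W]) (use W in auto)
  have "finite (C \<inter> {\<gamma>. q \<gamma> = x}) \<and> card (C \<inter> {\<gamma>. q \<gamma> = x}) \<le> card T" for x
  proof -
    have sub: "C \<inter> {\<gamma>. q \<gamma> = x} \<subseteq> (\<Union>c\<in>T. W c \<inter> {\<gamma>. q \<gamma> = x})" using T(3) by auto
    have sf: "finite (W c \<inter> {\<gamma>. q \<gamma> = x}) \<and> card (W c \<inter> {\<gamma>. q \<gamma> = x}) \<le> 1" for c
      by (rule subsingleton_fiber) (use W in blast)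
    have fin: "finite (\<Union>c\<in>T. W c \<inter> {\<gamma>. q \<gamma> = x})"
      using T(2) sf by (intro finite_UN_I) auto
    have "card (C \<inter> {\<gamma>. q \<gamma> = x}) \<le> card (\<Union>c\<in>T. W c \<inter> {\<gamma>. q \<gamma> = x})"
      by (rule card_mono[OF fin sub])
    also have "\<dots> \<le> (\<Sum>c\<in>T. card (W c \<inter> {\<gamma>. q \<gamma> = x}))" by (rule card_UN_le[OF T(2)])
    also have "\<dots> \<le> (\<Sum>c\<in>T. 1)" by (rule sum_mono) (use sf in blast)
    finally show ?thesis using finite_subset[OF sub fin] by simp
  qed
  then show ?thesis by blast
qed

context tw begin

lemma r_loc_inj: "\<forall>g. \<exists>V. open V \<and> g \<in> V \<and> inj_on r V"
proof
  fix g
  obtain V h where "open V" "g \<in> V" "homeomorphism V (r ` V) r h"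
    using et unfolding etale_def by blast
  then show "\<exists>V. open V \<and> g \<in> V \<and> inj_on r V"
    unfolding homeomorphism_def by (metis inj_on_inverseI)
qed

lemma s_loc_inj: "\<forall>g. \<exists>V. open V \<and> g \<in> V \<and> inj_on s V"
proof
  fix g
  obtain V where V: "open V" "i g \<in> V" "inj_on r V" using r_loc_inj by blast
  have "open (i -` V)"
    using i_cont V(1) continuous_on_open_vimage[OF open_UNIV] by auto
  moreover have "g \<in> i -` V" using V(2) by simp
  moreover have "inj_on s (i -` V)"
  proof (rule inj_onI)
    fix a b assume "a \<in> i -` V" "b \<in> i -` V" "s a = s b"
    then have "r (i a) = r (i b)" "i a \<in> V" "i b \<in> V" by (auto simp: G.r_i)
    then have "i a = i b" using V(3) unfolding inj_on_def by blast
    then show "a = b" by (metis G.i_i)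
  qed
  ultimately show "\<exists>V. open V \<and> g \<in> V \<and> inj_on s V" by blast
qed

lemma fiber_count:
  assumes "compact C"
  shows "\<exists>N. \<forall>x. finite (C \<inter> {\<gamma>. s \<gamma> = x}) \<and> card (C \<inter> {\<gamma>. s \<gamma> = x}) \<le> N \<and>
                 finite (C \<inter> {\<gamma>. r \<gamma> = x}) \<and> card (C \<inter> {\<gamma>. r \<gamma> = x}) \<le> N"
proof -
  obtain N1 where N1: "\<forall>x. finite (C \<inter> {\<gamma>. s \<gamma> = x}) \<and> card (C \<inter> {\<gamma>. s \<gamma> = x}) \<le> N1"
    using fiber_count_gen[OF s_loc_inj assms] by blast
  obtain N2 where N2: "\<forall>x. finite (C \<inter> {\<gamma>. r \<gamma> = x}) \<and> card (C \<inter> {\<gamma>. r \<gamma> = x}) \<le> N2"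
    using fiber_count_gen[OF r_loc_inj assms] by blast
  show ?thesis using N1 N2 by (intro exI[of _ "max N1 N2"]) (meson le_trans max.cobounded1 max.cobounded2)
qed

end


lemma pow_le_exp: assumes "0 \<le> x" shows "x ^ k \<le> real k ^ k * exp x"
proof (cases "k = 0")
  case True then show ?thesis using assms by simp
next
  case False
  have "(1 + x / real k) ^ k \<le> exp x"
    using False assms by (intro exp_ge_one_plus_x_over_n_power_n) auto
  moreover have "(x / real k) ^ k \<le> (1 + x / real k) ^ k"
    using assms by (intro power_mono) auto
  ultimately have "(x / real k) ^ k \<le> exp x" by linarith
  then show ?thesis using False by (simp add: power_divide field_simps)
qed

lemma exp_decay:
  assumes t: "0 < t"
  shows "\<exists>M. \<forall>u\<ge>0. exp (- t * u) * (1 + sqrt u) ^ k \<le> M"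
proof (intro exI allI impI)
  fix u :: real assume u: "0 \<le> u"
  have "sqrt u \<le> 1 + u"
  proof (cases "u \<le> 1")
    case True then have "sqrt u \<le> 1" by simp
    then show ?thesis using u by linarith
  next
    case False then have "1 \<le> sqrt u" by simp
    then have "sqrt u * 1 \<le> sqrt u * sqrt u" by (intro mult_left_mono) auto
    then have "sqrt u \<le> u" using u by simp
    then show ?thesis by simp
  qed
  then have a: "(1 + sqrt u) ^ k \<le> (2 + u) ^ k" using u by (intro power_mono) auto
  have "(t * (2 + u)) ^ k \<le> real k ^ k * exp (t * (2 + u))" using u t by (intro pow_le_exp) auto
  then have "t ^ k * (2 + u) ^ k \<le> real k ^ k * exp (t * (2 + u))"
    by (simp only: power_mult_distrib)
  then have b: "(2 + u) ^ k \<le> real k ^ k * exp (t * (2 + u)) / t ^ k"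
    using t by (simp add: pos_le_divide_eq mult.commute)
  have "exp (- t * u) * (1 + sqrt u) ^ k \<le> exp (- t * u) * (real k ^ k * exp (t * (2 + u)) / t ^ k)"
    using a b by (intro mult_left_mono) auto
  also have "\<dots> = real k ^ k * exp (2 * t) / t ^ k"
    by (simp add: exp_add[symmetric] algebra_simps)
  finally show "exp (- t * u) * (1 + sqrt u) ^ k \<le> real k ^ k * exp (2 * t) / t ^ k" .
qed

lemma sqrt_le_of_sq: "0 \<le> B \<Longrightarrow> S \<le> B\<^sup>2 \<Longrightarrow> sqrt S \<le> B"
  using real_sqrt_le_mono[of S "B\<^sup>2"] by simp

lemma n2pL_le:
  assumes "\<And>x F. x \<in> G0 \<Longrightarrow> finite F \<Longrightarrow> F \<subseteq> {\<gamma>. s \<gamma> = x} \<Longrightarrow>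
            (\<Sum>\<gamma>\<in>F. (cmod (f (lift p \<gamma>) * complex_of_real ((1 + L \<gamma>) ^ k)))\<^sup>2) \<le> B\<^sup>2"
    and "\<And>x F. x \<in> G0 \<Longrightarrow> finite F \<Longrightarrow> F \<subseteq> {\<gamma>. r \<gamma> = x} \<Longrightarrow>
            (\<Sum>\<gamma>\<in>F. (cmod (f (lift p \<gamma>) * complex_of_real ((1 + L \<gamma>) ^ k)))\<^sup>2) \<le> B\<^sup>2"
    and B: "0 \<le> B"
  shows "norm_2pL G0 r s p L k f \<le> ereal B"
proof -
  have *: "l2n A (\<lambda>\<gamma>. f (lift p \<gamma>) * complex_of_real ((1 + L \<gamma>) ^ k)) \<le> ereal B"
    if "\<And>F. finite F \<Longrightarrow> F \<subseteq> A \<Longrightarrow> (\<Sum>\<gamma>\<in>F. (cmod (f (lift p \<gamma>) * complex_of_real ((1 + L \<gamma>) ^ k)))\<^sup>2) \<le> B\<^sup>2"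
    for A
    unfolding l2n_def
  proof (rule SUP_least)
    fix F assume "F \<in> {F. finite F \<and> F \<subseteq> A}"
    then have "(\<Sum>\<gamma>\<in>F. (cmod (f (lift p \<gamma>) * complex_of_real ((1 + L \<gamma>) ^ k)))\<^sup>2) \<le> B\<^sup>2" using that by auto
    then have "sqrt (\<Sum>\<gamma>\<in>F. (cmod (f (lift p \<gamma>) * complex_of_real ((1 + L \<gamma>) ^ k)))\<^sup>2) \<le> B"
      by (rule sqrt_le_of_sq[OF B])
    then show "ereal (sqrt (\<Sum>\<gamma>\<in>F. (cmod (f (lift p \<gamma>) * complex_of_real ((1 + L \<gamma>) ^ k)))\<^sup>2)) \<le> ereal B" by simp
  qed
  show ?thesis unfolding norm_2pL_def
    by (intro max.boundedI SUP_least *; blast intro: assms(1,2))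
qed


context tw begin

lemma sec_diff: "is_section r mS p iota a \<Longrightarrow> is_section r mS p iota b \<Longrightarrow>
   is_section r mS p iota (\<lambda>\<sigma>. a \<sigma> - b \<sigma>)"
  unfolding is_section_def by (simp add: right_diff_distrib)

lemma sec_add: "is_section r mS p iota a \<Longrightarrow> is_section r mS p iota b \<Longrightarrow>
   is_section r mS p iota (\<lambda>\<sigma>. a \<sigma> + b \<sigma>)"
  unfolding is_section_def by (simp add: distrib_left)

lemma sec_scale:
  assumes "is_section r mS p iota h"
    and "\<And>\<sigma> z. z \<in> sphere 0 1 \<Longrightarrow> w (mS (iota z (r (p \<sigma>))) \<sigma>) = w \<sigma>"
  shows "is_section r mS p iota (\<lambda>\<sigma>. w \<sigma> * h \<sigma>)"
  using assms unfolding is_section_def by (simp add: mult.left_commute)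

lemma sec_inv_p: "z \<in> sphere 0 1 \<Longrightarrow> \<phi> (p (mS (iota z (r (p \<sigma>))) \<sigma>)) = \<phi> (p \<sigma>)"
  by (simp add: p_act)

lemma sec_inv_abs: "is_section r mS p iota h \<Longrightarrow> z \<in> sphere 0 1 \<Longrightarrow>
   \<phi> (cmod (h (mS (iota z (r (p \<sigma>))) \<sigma>))) = \<phi> (cmod (h \<sigma>))"
  unfolding is_section_def by (simp add: norm_mult)

lemma abs_cont:
  assumes h: "is_section r mS p iota h" and hc: "continuous_on UNIV h"
  shows "continuous_on UNIV (\<lambda>\<gamma>. cmod (h (lift p \<gamma>)))"
proof (rule continuous_at_imp_continuous_on, intro ballI)
  fix \<gamma> :: 'g
  obtain V S where V: "open V" "\<gamma> \<in> V" "continuous_on V S" "\<forall>g\<in>V. p (S g) = g"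
    using loc_triv[of \<gamma>] by blast
  have "continuous_on V (\<lambda>g. cmod (h (S g)))"
    by (intro continuous_on_norm continuous_on_compose2[OF hc V(3)]) auto
  moreover have "cmod (h (S g)) = cmod (h (lift p g))" if "g \<in> V" for g
    using section_mod[OF h] V(4) that p_lift by metis
  ultimately have "continuous_on V (\<lambda>g. cmod (h (lift p g)))"
    using continuous_on_cong by fastforce
  then show "isCont (\<lambda>\<gamma>. cmod (h (lift p \<gamma>))) \<gamma>"
    using continuous_on_eq_continuous_at[OF V(1)] V(2) by blast
qed

lemma Cr_cont:
  assumes "Cr_sec G0 r s mS iS p iota f"
  shows "continuous_on UNIV f"
proof -
  obtain fn where fn: "\<And>n. Cc_sec r mS p iota (fn n)"
    and lim: "((\<lambda>n. rnorm G0 s mS iS p (\<lambda>\<sigma>. f \<sigma> - fn n \<sigma>)) \<longlongrightarrow> 0) sequentially"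
    and fs: "is_section r mS p iota f"
    using assms unfolding Cr_sec_def by blast
  have "uniform_limit UNIV fn f sequentially"
    unfolding uniform_limit_iff
  proof (intro allI impI)
    fix e :: real assume e: "0 < e"
    have "\<forall>\<^sub>F n in sequentially. rnorm G0 s mS iS p (\<lambda>\<sigma>. f \<sigma> - fn n \<sigma>) < ereal (e / 2)"
      using order_tendstoD(2)[OF lim] e by (simp add: zero_ereal_def)
    then show "\<forall>\<^sub>F n in sequentially. \<forall>x\<in>UNIV. dist (fn n x) (f x) < e"
    proof (rule eventually_mono)
      fix n assume n: "rnorm G0 s mS iS p (\<lambda>\<sigma>. f \<sigma> - fn n \<sigma>) < ereal (e / 2)"
      have sec: "is_section r mS p iota (\<lambda>\<sigma>. f \<sigma> - fn n \<sigma>)"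
        using fs fn[of n] unfolding Cc_sec_def by (blast intro: sec_diff)
      show "\<forall>x\<in>UNIV. dist (fn n x) (f x) < e"
      proof
        fix x
        have "cmod (f x - fn n x) \<le> e / 2" by (rule pt_bound[OF sec less_imp_le[OF n]])
        then show "dist (fn n x) (f x) < e" using e by (simp add: dist_norm norm_minus_commute)
      qed
    qed
  qed
  moreover have "\<forall>\<^sub>F n in sequentially. continuous_on UNIV (fn n)"
    using fn unfolding Cc_sec_def by simp
  ultimately show ?thesis by (intro uniform_limit_theorem) auto
qed

end


lemma bounded_on_compact:
  fixes \<phi> :: "'a::topological_space \<Rightarrow> real"
  assumes "compact K" "continuous_on UNIV \<phi>"
  shows "\<exists>B\<ge>0. \<forall>\<gamma>\<in>K. \<bar>\<phi> \<gamma>\<bar> \<le> B"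
proof -
  have "compact (\<phi> ` K)" by (rule compact_continuous_image[OF continuous_on_subset[OF assms(2)] assms(1)]) auto
  then obtain a where "\<forall>y\<in>\<phi> ` K. \<bar>y\<bar> \<le> a" using compact_imp_bounded bounded_real by blast
  then show ?thesis by (intro exI[of _ "max a 0"]) auto
qed

lemma sqrt_sum_sq_le: "0 \<le> a \<Longrightarrow> 0 \<le> b \<Longrightarrow> sqrt (a\<^sup>2 + b\<^sup>2) \<le> a + b"
  by (rule sqrt_le_of_sq) (auto simp: power2_eq_square algebra_simps)

lemma compact_closure_sub:
  assumes "A \<subseteq> B" "compact (closure B)" shows "compact (closure A)"
proof -
  have "closure A = closure B \<inter> closure A" using closure_mono[OF assms(1)] by blast
  moreover have "compact (closure B \<inter> closure A)" by (rule compact_Int_closed[OF assms(2) closed_closure])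
  ultimately show ?thesis by simp
qed

lemma CcD1: "Cc_sec r mS p iota h \<Longrightarrow> is_section r mS p iota h"
  unfolding Cc_sec_def by (rule conjunct1)
lemma CcD2: "Cc_sec r mS p iota h \<Longrightarrow> continuous_on UNIV h"
  unfolding Cc_sec_def by (rule conjunct1[OF conjunct2])
lemma CcD3: "Cc_sec r mS p iota h \<Longrightarrow> compact (closure (p ` {\<sigma>. h \<sigma> \<noteq> 0}))"
  unfolding Cc_sec_def by (rule conjunct2[OF conjunct2])
lemma CcI: "is_section r mS p iota h \<Longrightarrow> continuous_on UNIV h \<Longrightarrow> compact (closure (p ` {\<sigma>. h \<sigma> \<noteq> 0}))
   \<Longrightarrow> Cc_sec r mS p iota h"
  unfolding Cc_sec_def by (intro conjI)

context tw begin

lemma Cc_mult: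
  assumes h: "Cc_sec r mS p iota h" and w: "continuous_on UNIV w"
    and inv: "\<And>\<sigma> z. z \<in> sphere 0 1 \<Longrightarrow> w (mS (iota z (r (p \<sigma>))) \<sigma>) = w \<sigma>"
  shows "Cc_sec r mS p iota (\<lambda>\<sigma>. w \<sigma> * h \<sigma>)"
proof -
  have sec: "is_section r mS p iota (\<lambda>\<sigma>. w \<sigma> * h \<sigma>)"
  proof (rule sec_scale)
    show "is_section r mS p iota h" using h by (rule CcD1)
  qed (rule inv)
  have cont: "continuous_on UNIV (\<lambda>\<sigma>. w \<sigma> * h \<sigma>)"
    using CcD2[OF h] w by (intro continuous_intros) auto
  have "compact (closure (p ` {\<sigma>. w \<sigma> * h \<sigma> \<noteq> 0}))"
    by (rule compact_closure_sub[OF _ CcD3[OF h]]) auto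
  then show ?thesis using sec cont by (intro CcI)
qed

lemma colrow_bound:
  assumes h: "is_section r mS p iota h" and R: "rnorm G0 s mS iS p h \<le> ereal R"
    and x: "x \<in> G0" and F: "finite F" "F \<subseteq> {\<gamma>. s \<gamma> = x} \<or> F \<subseteq> {\<gamma>. r \<gamma> = x}"
  shows "(\<Sum>\<gamma>\<in>F. (cmod (h (lift p \<gamma>)))\<^sup>2) \<le> R\<^sup>2"
  using F(2) col_bound[OF h R x F(1)] row_bound[OF h R x F(1)] by blast

lemma n2pL_supp:
  assumes N: "\<forall>x. finite (K \<inter> {\<gamma>. s \<gamma> = x}) \<and> card (K \<inter> {\<gamma>. s \<gamma> = x}) \<le> N \<and>
                 finite (K \<inter> {\<gamma>. r \<gamma> = x}) \<and> card (K \<inter> {\<gamma>. r \<gamma> = x}) \<le> N"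
    and supp: "\<And>\<gamma>. h (lift p \<gamma>) \<noteq> 0 \<Longrightarrow> \<gamma> \<in> K"
    and bd: "\<And>\<gamma>. \<gamma> \<in> K \<Longrightarrow> cmod (h (lift p \<gamma>) * complex_of_real ((1 + L \<gamma>) ^ k)) \<le> Bd"
    and Bd: "0 \<le> Bd"
  shows "norm_2pL G0 r s p L k h \<le> ereal (sqrt (real N) * Bd)"
proof -
  have *: "(\<Sum>\<gamma>\<in>F. (cmod (h (lift p \<gamma>) * complex_of_real ((1 + L \<gamma>) ^ k)))\<^sup>2) \<le> (sqrt (real N) * Bd)\<^sup>2"
    if F: "finite F" "F \<subseteq> {\<gamma>. q \<gamma> = x}" and Nq: "finite (K \<inter> {\<gamma>. q \<gamma> = x}) \<and> card (K \<inter> {\<gamma>. q \<gamma> = x}) \<le> N"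
    for F x and q :: "'g \<Rightarrow> 'g"
  proof -
    have "(\<Sum>\<gamma>\<in>F. (cmod (h (lift p \<gamma>) * complex_of_real ((1 + L \<gamma>) ^ k)))\<^sup>2)
        = (\<Sum>\<gamma>\<in>F \<inter> K. (cmod (h (lift p \<gamma>) * complex_of_real ((1 + L \<gamma>) ^ k)))\<^sup>2)"
      using F(1) supp by (intro sum.mono_neutral_right) auto
    also have "\<dots> \<le> (\<Sum>\<gamma>\<in>F \<inter> K. Bd\<^sup>2)"
      using bd Bd by (intro sum_mono power_mono) auto
    also have "\<dots> = real (card (F \<inter> K)) * Bd\<^sup>2" by simp
    also have "card (F \<inter> K) \<le> N"
    proof -
      have "F \<inter> K \<subseteq> K \<inter> {\<gamma>. q \<gamma> = x}" using F by auto
      then have "card (F \<inter> K) \<le> card (K \<inter> {\<gamma>. q \<gamma> = x})" using Nq by (intro card_mono) auto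
      then show ?thesis using Nq by linarith
    qed
    then have "real (card (F \<inter> K)) * Bd\<^sup>2 \<le> real N * Bd\<^sup>2" by (intro mult_right_mono) auto
    also have "\<dots> = (sqrt (real N) * Bd)\<^sup>2" by (simp add: power_mult_distrib)
    finally show ?thesis .
  qed
  show ?thesis
    by (rule n2pL_le) (use * N Bd in auto)
qed

lemma Ev_pt:
  assumes "\<And>\<sigma>. cmod (h \<sigma>) \<le> \<rho>" "adm x \<xi>" "finite F"
  shows "Ev h \<xi> F \<le> \<rho> * real (card {\<eta>. \<xi> \<eta> \<noteq> 0}) * sqrt (real (card F))"
proof -
  define E where "E = {\<eta>. \<xi> \<eta> \<noteq> 0}"
  have E: "finite E" "\<And>\<eta>. \<eta> \<in> E \<Longrightarrow> cmod (\<xi> \<eta>) \<le> 1"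
  proof -
    show "finite E" using assms(2) unfolding adm_def E_def by auto
    fix \<eta> assume e: "\<eta> \<in> E"
    have "(cmod (\<xi> \<eta>))\<^sup>2 \<le> (\<Sum>\<eta>\<in>E. (cmod (\<xi> \<eta>))\<^sup>2)"
      using e \<open>finite E\<close> by (intro member_le_sum) auto
    also have "\<dots> \<le> 1" using assms(2) unfolding adm_def E_def by auto
    finally show "cmod (\<xi> \<eta>) \<le> 1" by (simp add: power_le_one_iff)
  qed
  have \<rho>: "0 \<le> \<rho>" using assms(1) norm_ge_zero order_trans by blast
  have pt: "cmod (regrep mS iS p h \<xi> \<gamma>) \<le> \<rho> * real (card E)" for \<gamma>
  proof -
    have "cmod (regrep mS iS p h \<xi> \<gamma>) \<le> (\<Sum>\<eta>\<in>E. cmod (h (mS (lift p \<gamma>) (iS (lift p \<eta>))) * \<xi> \<eta>))"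
      unfolding regrep_def E_def by (rule norm_sum)
    also have "\<dots> \<le> (\<Sum>\<eta>\<in>E. \<rho>)"
    proof (rule sum_mono)
      fix \<eta> assume "\<eta> \<in> E"
      have "cmod (h (mS (lift p \<gamma>) (iS (lift p \<eta>)))) * cmod (\<xi> \<eta>) \<le> \<rho> * 1"
        using assms(1) E(2)[OF \<open>\<eta> \<in> E\<close>] \<rho> by (intro mult_mono) auto
      then show "cmod (h (mS (lift p \<gamma>) (iS (lift p \<eta>))) * \<xi> \<eta>) \<le> \<rho>" by (simp add: norm_mult)
    qed
    finally show ?thesis by (simp add: mult.commute)
  qed
  have "(\<Sum>\<gamma>\<in>F. (cmod (regrep mS iS p h \<xi> \<gamma>))\<^sup>2) \<le> (\<Sum>\<gamma>\<in>F. (\<rho> * real (card E))\<^sup>2)"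
    using pt by (intro sum_mono power_mono) auto
  also have "\<dots> = (\<rho> * real (card E) * sqrt (real (card F)))\<^sup>2"
    by (simp add: power_mult_distrib)
  finally show ?thesis unfolding Ev_def E_def[symmetric]
    using \<rho> by (intro sqrt_le_of_sq) auto
qed

end


context twp begin

lemma psip_cont: "continuous_on UNIV (\<lambda>\<sigma>. \<psi> (p \<sigma>))"
  by (rule continuous_on_compose2[OF P.psi_cont p_cont]) auto

lemma approx_Cc:
  assumes "Cr_sec G0 r s mS iS p iota f" "0 < \<delta>"
  shows "\<exists>h. Cc_sec r mS p iota h \<and> rnorm G0 s mS iS p (\<lambda>\<sigma>. f \<sigma> - h \<sigma>) \<le> ereal \<delta>"
proof -
  obtain fn where fn: "\<And>n. Cc_sec r mS p iota (fn n)"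
    and lim: "((\<lambda>n. rnorm G0 s mS iS p (\<lambda>\<sigma>. f \<sigma> - fn n \<sigma>)) \<longlongrightarrow> 0) sequentially"
    using assms(1) unfolding Cr_sec_def by blast
  have "\<forall>\<^sub>F n in sequentially. rnorm G0 s mS iS p (\<lambda>\<sigma>. f \<sigma> - fn n \<sigma>) < ereal \<delta>"
    using order_tendstoD(2)[OF lim] assms(2) by (simp add: zero_ereal_def)
  then obtain n where n: "rnorm G0 s mS iS p (\<lambda>\<sigma>. f \<sigma> - fn n \<sigma>) < ereal \<delta>"
    using eventually_sequentially by auto
  show ?thesis
    by (rule exI[of _ "fn n"], intro conjI fn less_imp_le[OF n])
qed

lemma supp_in_closure: "h (lift p \<gamma>) \<noteq> 0 \<Longrightarrow> \<gamma> \<in> closure (p ` {\<sigma>. h \<sigma> \<noteq> 0})"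
proof -
  assume "h (lift p \<gamma>) \<noteq> 0"
  then have "lift p \<gamma> \<in> {\<sigma>. h \<sigma> \<noteq> 0}" by simp
  then have "p (lift p \<gamma>) \<in> p ` {\<sigma>. h \<sigma> \<noteq> 0}" by (rule imageI)
  then have "\<gamma> \<in> p ` {\<sigma>. h \<sigma> \<noteq> 0}" by (simp only: p_lift)
  then show ?thesis using closure_subset by (rule subsetD[rotated])
qed

lemma one_minus_exp: "0 \<le> (y::real) \<Longrightarrow> \<bar>1 - exp (- y)\<bar> \<le> y"
  using exp_ge_add_one_self[of "- y"] by (simp add: abs_if)

lemma step1:
  assumes fCr: "Cr_sec G0 r s mS iS p iota f" and c: "0 < c"
    and RD: "\<forall>h. Cc_sec r mS p iota h \<longrightarrow>
        rnorm G0 s mS iS p h \<le> ereal c * norm_2pL G0 r s p (\<lambda>g. sqrt (\<psi> g)) kk h"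
    and \<delta>: "0 < \<delta>"
  shows "\<exists>t>0. rnorm G0 s mS iS p (\<lambda>\<sigma>. f \<sigma> - complex_of_real (exp (- t * \<psi> (p \<sigma>))) * f \<sigma>) \<le> ereal (3 * \<delta>)"
proof -
  obtain g1 where g1: "Cc_sec r mS p iota g1" and fg1: "rnorm G0 s mS iS p (\<lambda>\<sigma>. f \<sigma> - g1 \<sigma>) \<le> ereal \<delta>"
    using approx_Cc[OF fCr \<delta>] by blast
  define K1 where "K1 = closure (p ` {\<sigma>. g1 \<sigma> \<noteq> 0})"
  have K1: "compact K1" unfolding K1_def by (rule CcD3[OF g1])
  obtain N1 where N1: "\<forall>x. finite (K1 \<inter> {\<gamma>. s \<gamma> = x}) \<and> card (K1 \<inter> {\<gamma>. s \<gamma> = x}) \<le> N1 \<and>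
                 finite (K1 \<inter> {\<gamma>. r \<gamma> = x}) \<and> card (K1 \<inter> {\<gamma>. r \<gamma> = x}) \<le> N1"
    using fiber_count[OF K1] by blast
  obtain B1 where B1: "0 \<le> B1" "\<forall>\<gamma>\<in>K1. \<bar>cmod (g1 (lift p \<gamma>))\<bar> \<le> B1"
    using bounded_on_compact[OF K1 abs_cont[OF CcD1[OF g1] CcD2[OF g1]]] by blast
  obtain T1 where T1: "0 \<le> T1" "\<forall>\<gamma>\<in>K1. \<bar>\<psi> \<gamma>\<bar> \<le> T1"
    using bounded_on_compact[OF K1 P.psi_cont] by blast
  have wc: "continuous_on UNIV (\<lambda>\<gamma>. (1 + sqrt (\<psi> \<gamma>)) ^ kk)"
    by (intro continuous_intros continuous_on_compose2[OF continuous_on_real_sqrt P.psi_cont]) auto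
  obtain W1 where W1: "0 \<le> W1" "\<forall>\<gamma>\<in>K1. \<bar>(1 + sqrt (\<psi> \<gamma>)) ^ kk\<bar> \<le> W1"
    using bounded_on_compact[OF K1 wc] by blast
  define X where "X = c * sqrt (real N1) * B1 * W1 * T1"
  have X: "0 \<le> X" unfolding X_def using c B1 W1 T1 by simp
  define t where "t = \<delta> / (X + 1)"
  have t: "0 < t" unfolding t_def using \<delta> X by simp
  have tX: "X * t \<le> \<delta>"
  proof -
    have "X * t = \<delta> * (X / (X + 1))" unfolding t_def by (simp add: field_simps)
    also have "\<dots> \<le> \<delta> * 1" using X \<delta> by (intro mult_left_mono) auto
    finally show ?thesis by simp
  qed
  let ?k = "\<lambda>\<sigma>. complex_of_real (exp (- t * \<psi> (p \<sigma>)))"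
  define h1 where "h1 \<sigma> = complex_of_real (1 - exp (- t * \<psi> (p \<sigma>))) * g1 \<sigma>" for \<sigma>
  have h1: "Cc_sec r mS p iota h1" unfolding h1_def
    by (rule Cc_mult[OF g1]) (auto intro!: continuous_intros psip_cont simp: sec_inv_p)
  have n1: "norm_2pL G0 r s p (\<lambda>g. sqrt (\<psi> g)) kk h1 \<le> ereal (sqrt (real N1) * (t * T1 * B1 * W1))"
  proof (rule n2pL_supp[OF N1])
    fix \<gamma> assume "h1 (lift p \<gamma>) \<noteq> 0"
    then have "g1 (lift p \<gamma>) \<noteq> 0" unfolding h1_def by auto
    then show "\<gamma> \<in> K1" unfolding K1_def by (rule supp_in_closure)
  next
    fix \<gamma> assume g: "\<gamma> \<in> K1"
    have e: "\<bar>1 - exp (- t * \<psi> (p (lift p \<gamma>)))\<bar> \<le> t * T1"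
    proof -
      have "\<bar>1 - exp (- (t * \<psi> \<gamma>))\<bar> \<le> t * \<psi> \<gamma>"
        using t P.psi_nonneg[of \<gamma>] by (intro one_minus_exp) auto
      also have "\<dots> \<le> t * T1" using T1 g t by (intro mult_left_mono) auto
      finally show ?thesis by (simp add: p_lift)
    qed
    have "cmod (h1 (lift p \<gamma>) * complex_of_real ((1 + sqrt (\<psi> \<gamma>)) ^ kk))
        = \<bar>1 - exp (- t * \<psi> (p (lift p \<gamma>)))\<bar> * cmod (g1 (lift p \<gamma>)) * \<bar>(1 + sqrt (\<psi> \<gamma>)) ^ kk\<bar>"
      unfolding h1_def by (simp only: norm_mult norm_of_real)
    also have "\<dots> \<le> (t * T1) * B1 * W1"
      using e B1 W1 g by (intro mult_mono) auto
    finally show "cmod (h1 (lift p \<gamma>) * complex_of_real ((1 + sqrt (\<psi> \<gamma>)) ^ kk)) \<le> t * T1 * B1 * W1" .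
  next
    show "0 \<le> t * T1 * B1 * W1" using t T1 B1 W1 by simp
  qed
  have rh1: "rnorm G0 s mS iS p h1 \<le> ereal \<delta>"
  proof -
    have "rnorm G0 s mS iS p h1 \<le> ereal c * norm_2pL G0 r s p (\<lambda>g. sqrt (\<psi> g)) kk h1"
      using RD h1 by blast
    also have "\<dots> \<le> ereal c * ereal (sqrt (real N1) * (t * T1 * B1 * W1))"
      using c by (intro ereal_mult_left_mono n1) auto
    also have "\<dots> = ereal (X * t)" by (simp add: X_def mult_ac)
    also have "\<dots> \<le> ereal \<delta>" using tX by simp
    finally show ?thesis .
  qed
  have rk: "rnorm G0 s mS iS p (\<lambda>\<sigma>. ?k \<sigma> * (g1 \<sigma> - f \<sigma>)) \<le> ereal \<delta>"
  proof -
    have "rnorm G0 s mS iS p (\<lambda>\<sigma>. ?k \<sigma> * (g1 \<sigma> - f \<sigma>)) \<le> rnorm G0 s mS iS p (\<lambda>\<sigma>. g1 \<sigma> - f \<sigma>)"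
      using t by (intro contract) auto
    also have "\<dots> = rnorm G0 s mS iS p (\<lambda>\<sigma>. f \<sigma> - g1 \<sigma>)" by (rule rnorm_diff_commute)
    finally show ?thesis using fg1 by simp
  qed
  have eq: "(\<lambda>\<sigma>. f \<sigma> - ?k \<sigma> * f \<sigma>) = (\<lambda>\<sigma>. (f \<sigma> - g1 \<sigma>) + (?k \<sigma> * (g1 \<sigma> - f \<sigma>) + h1 \<sigma>))"
    by (intro ext) (simp add: h1_def algebra_simps)
  have "rnorm G0 s mS iS p (\<lambda>\<sigma>. f \<sigma> - ?k \<sigma> * f \<sigma>) \<le>
      rnorm G0 s mS iS p (\<lambda>\<sigma>. f \<sigma> - g1 \<sigma>) + rnorm G0 s mS iS p (\<lambda>\<sigma>. ?k \<sigma> * (g1 \<sigma> - f \<sigma>) + h1 \<sigma>)"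
    unfolding eq by (rule rnorm_add)
  also have "\<dots> \<le> rnorm G0 s mS iS p (\<lambda>\<sigma>. f \<sigma> - g1 \<sigma>) + (rnorm G0 s mS iS p (\<lambda>\<sigma>. ?k \<sigma> * (g1 \<sigma> - f \<sigma>)) + rnorm G0 s mS iS p h1)"
    by (intro add_left_mono rnorm_add)
  also have "\<dots> \<le> ereal \<delta> + (ereal \<delta> + ereal \<delta>)"
    by (intro add_mono fg1 rk rh1)
  also have "\<dots> = ereal (3 * \<delta>)" by simp
  finally show ?thesis using t by blast
qed

end


definition cutf :: "real \<Rightarrow> real \<Rightarrow> real" where "cutf \<eta> x = min 1 (max 0 (x / \<eta> - 1))"

lemma cut_bounds: "0 \<le> cutf \<eta> x" "cutf \<eta> x \<le> 1"
  unfolding cutf_def by auto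

lemma cut_nz: assumes "0 < \<eta>" "cutf \<eta> x \<noteq> 0" shows "\<eta> < x"
proof (rule ccontr)
  assume "\<not> \<eta> < x"
  then have "x / \<eta> \<le> 1" using assms(1) by (simp add: divide_le_eq_1_pos)
  then have "cutf \<eta> x = 0" unfolding cutf_def by simp
  then show False using assms(2) by simp
qed

lemma cut_tail: assumes "0 < \<eta>" "0 \<le> x" shows "(1 - cutf \<eta> x) * x \<le> 2 * \<eta>"
proof (cases "x < 2 * \<eta>")
  case True
  have "(1 - cutf \<eta> x) * x \<le> 1 * x" using cut_bounds[of \<eta> x] assms by (intro mult_right_mono) auto
  then show ?thesis using True by simp
next
  case False
  then have "x / \<eta> - 1 \<ge> 1" using assms by (simp add: field_simps)
  then have "cutf \<eta> x = 1" unfolding cutf_def by simp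
  then show ?thesis using assms by simp
qed

lemma cut_cont: "continuous_on UNIV (\<lambda>x. cutf \<eta> x)"
  unfolding cutf_def divide_inverse by (intro continuous_intros)

context twp begin

lemma step2:
  assumes fCr: "Cr_sec G0 r s mS iS p iota f" and c: "0 < c"
    and RD: "\<forall>h. Cc_sec r mS p iota h \<longrightarrow>
        rnorm G0 s mS iS p h \<le> ereal c * norm_2pL G0 r s p (\<lambda>g. sqrt (\<psi> g)) kk h"
    and t: "0 < t" and \<epsilon>: "0 < \<epsilon>"
  shows "\<exists>g. Cc_sec r mS p iota g \<and> closure (p ` {\<sigma>. g \<sigma> \<noteq> 0}) \<subseteq> p ` {\<sigma>. f \<sigma> \<noteq> 0} \<and>
     rnorm G0 s mS iS p (\<lambda>\<sigma>. complex_of_real (exp (- t * \<psi> (p \<sigma>))) * f \<sigma> - g \<sigma>) \<le> ereal \<epsilon>"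
proof -
  have fs: "is_section r mS p iota f" using fCr unfolding Cr_sec_def by (rule conjunct1)
  have fc: "continuous_on UNIV f" by (rule Cr_cont[OF fCr])
  obtain M where M: "\<forall>u\<ge>0. exp (- t * u) * (1 + sqrt u) ^ kk \<le> M" using exp_decay[OF t] by blast
  have M1: "1 \<le> M" using M[rule_format, of 0] by simp
  define \<delta>2 where "\<delta>2 = \<epsilon> / (2 * c * M)"
  have \<delta>2: "0 < \<delta>2" unfolding \<delta>2_def using \<epsilon> c M1 by simp
  obtain g2 where g2: "Cc_sec r mS p iota g2" and fg2: "rnorm G0 s mS iS p (\<lambda>\<sigma>. f \<sigma> - g2 \<sigma>) \<le> ereal \<delta>2"
    using approx_Cc[OF fCr \<delta>2] by blast
  define K2 where "K2 = closure (p ` {\<sigma>. g2 \<sigma> \<noteq> 0})"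
  have K2: "compact K2" unfolding K2_def by (rule CcD3[OF g2])
  obtain N2 where N2: "\<forall>x. finite (K2 \<inter> {\<gamma>. s \<gamma> = x}) \<and> card (K2 \<inter> {\<gamma>. s \<gamma> = x}) \<le> N2 \<and>
                 finite (K2 \<inter> {\<gamma>. r \<gamma> = x}) \<and> card (K2 \<inter> {\<gamma>. r \<gamma> = x}) \<le> N2"
    using fiber_count[OF K2] by blast
  define \<eta> where "\<eta> = \<epsilon> / (4 * c * M * (sqrt (real N2) + 1))"
  have \<eta>: "0 < \<eta>" unfolding \<eta>_def using \<epsilon> c M1 by (simp add: add_nonneg_pos)
  have \<eta>2: "c * M * (2 * sqrt (real N2) * \<eta>) \<le> \<epsilon> / 2"
  proof -
    have sp: "0 < sqrt (real N2) + 1" by (simp add: add_nonneg_pos)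
    have D: "4 * c * M * (sqrt (real N2) + 1) \<noteq> 0" using c M1 sp by simp
    have e1: "\<eta> * (4 * c * M * (sqrt (real N2) + 1)) = \<epsilon>" unfolding \<eta>_def using D by simp
    have "c * M * (2 * sqrt (real N2) * \<eta>) \<le> c * M * (2 * (sqrt (real N2) + 1) * \<eta>)"
      using c M1 \<eta> by (intro mult_left_mono) auto
    also have "\<dots> = (\<eta> * (4 * c * M * (sqrt (real N2) + 1))) / 2" by (simp add: algebra_simps)
    also have "\<dots> = \<epsilon> / 2" using e1 by simp
    finally show ?thesis .
  qed
  define A where "A = c * M * (2 * sqrt (real N2) * \<eta> + \<delta>2)"
  have A: "A \<le> \<epsilon>"
  proof -
    have "c * M * \<delta>2 = \<epsilon> / 2" unfolding \<delta>2_def using c M1 by simp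
    then show ?thesis unfolding A_def using \<eta>2 by (simp add: distrib_left)
  qed
  let ?w = "\<lambda>\<sigma>. exp (- t * \<psi> (p \<sigma>)) * (1 - cutf \<eta> (cmod (f \<sigma>)))"
  define R where "R \<sigma> = complex_of_real (?w \<sigma>) * f \<sigma>" for \<sigma>
  define g where "g \<sigma> = complex_of_real (exp (- t * \<psi> (p \<sigma>)) * cutf \<eta> (cmod (f \<sigma>))) * f \<sigma>" for \<sigma>
  have w01: "0 \<le> ?w \<sigma> \<and> ?w \<sigma> \<le> 1" for \<sigma>
  proof -
    have "exp (- t * \<psi> (p \<sigma>)) \<le> 1" using t P.psi_nonneg[of "p \<sigma>"] by simp
    then show ?thesis using cut_bounds[of \<eta> "cmod (f \<sigma>)"] by (auto intro: mult_le_one)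
  qed
  have wc: "continuous_on UNIV ?w"
    by (intro continuous_intros psip_cont continuous_on_compose2[OF cut_cont] fc) auto
  have winv: "?w (mS (iota z (r (p \<sigma>))) \<sigma>) = ?w \<sigma>" if "z \<in> sphere 0 1" for z \<sigma>
  proof -
    have "p (mS (iota z (r (p \<sigma>))) \<sigma>) = p \<sigma>" by (rule p_act[OF that])
    moreover have "cmod (f (mS (iota z (r (p \<sigma>))) \<sigma>)) = cmod (f \<sigma>)"
      using sec_inv_abs[OF fs that, of "\<lambda>x. x"] by simp
    ultimately show ?thesis by simp
  qed
  have RR: "rnorm G0 s mS iS p R \<le> ereal A"
  proof (rule rnorm_le)
    fix x \<xi> F assume a: "adm x \<xi>" and F: "finite F" "F \<subseteq> {\<gamma>. s \<gamma> = x}"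
    have x: "x \<in> G0" using a unfolding adm_def by blast
    define CE where "CE = real (card {\<eta>. \<xi> \<eta> \<noteq> 0}) * sqrt (real (card F))"
    have CE: "0 \<le> CE" unfolding CE_def by simp
    have "Ev R \<xi> F \<le> A + e" if e: "0 < e" for e
    proof -
      define \<rho> where "\<rho> = e / (c * M + CE + 1)"
      have cM: "0 \<le> c * M" using c M1 by simp
      have \<rho>: "0 < \<rho>" unfolding \<rho>_def using e cM CE by (intro divide_pos_pos) auto
      have \<rho>e: "\<rho> * (c * M + CE) \<le> e"
      proof -
        have "\<rho> * (c * M + CE) = e * ((c * M + CE) / (c * M + CE + 1))"
          unfolding \<rho>_def by (simp add: field_simps)
        also have "\<dots> \<le> e * 1" using e cM CE by (intro mult_left_mono) auto
        finally show ?thesis by simp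
      qed
      obtain fm where fm: "Cc_sec r mS p iota fm" and ffm: "rnorm G0 s mS iS p (\<lambda>\<sigma>. f \<sigma> - fm \<sigma>) \<le> ereal \<rho>"
        using approx_Cc[OF fCr \<rho>] by blast
      have ffms: "is_section r mS p iota (\<lambda>\<sigma>. f \<sigma> - fm \<sigma>)" by (rule sec_diff[OF fs CcD1[OF fm]])
      have fg2s: "is_section r mS p iota (\<lambda>\<sigma>. f \<sigma> - g2 \<sigma>)" by (rule sec_diff[OF fs CcD1[OF g2]])
      define Rm where "Rm \<sigma> = complex_of_real (?w \<sigma>) * fm \<sigma>" for \<sigma>
      have Rm: "Cc_sec r mS p iota Rm" unfolding Rm_def
      proof (rule Cc_mult[OF fm])
        show "continuous_on UNIV (\<lambda>\<sigma>. complex_of_real (?w \<sigma>))" by (rule continuous_on_of_real[OF wc])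
      next
        fix \<sigma> :: 's and z :: complex assume "z \<in> sphere 0 1"
        then show "complex_of_real (?w (mS (iota z (r (p \<sigma>))) \<sigma>)) = complex_of_real (?w \<sigma>)"
          using winv by simp
      qed
      have colsum: "(\<Sum>\<gamma>\<in>F'. (cmod (Rm (lift p \<gamma>) * complex_of_real ((1 + sqrt (\<psi> \<gamma>)) ^ kk)))\<^sup>2)
           \<le> (M * (2 * sqrt (real N2) * \<eta> + \<delta>2 + \<rho>))\<^sup>2"
        if y: "y \<in> G0" and F': "finite F'" "F' \<subseteq> {\<gamma>. s \<gamma> = y} \<or> F' \<subseteq> {\<gamma>. r \<gamma> = y}" for y F'
      proof -
        define v where "v \<gamma> = (1 - cutf \<eta> (cmod (f (lift p \<gamma>)))) * cmod (f (lift p \<gamma>))" for \<gamma>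
        define w where "w \<gamma> = cmod (f (lift p \<gamma>) - fm (lift p \<gamma>))" for \<gamma>
        define u where "u \<gamma> = (1 - cutf \<eta> (cmod (f (lift p \<gamma>)))) * cmod (fm (lift p \<gamma>))" for \<gamma>
        have v0: "0 \<le> v \<gamma>" for \<gamma> unfolding v_def using cut_bounds by simp
        have u0: "0 \<le> u \<gamma>" for \<gamma> unfolding u_def using cut_bounds by simp
        have uvw: "u \<gamma> \<le> v \<gamma> + w \<gamma>" for \<gamma>
        proof -
          have "cmod (fm (lift p \<gamma>)) \<le> cmod (f (lift p \<gamma>)) + w \<gamma>"
            unfolding w_def using norm_triangle_ineq4[of "f (lift p \<gamma>)" "f (lift p \<gamma>) - fm (lift p \<gamma>)"] by simp
          moreover have "0 \<le> 1 - cutf \<eta> (cmod (f (lift p \<gamma>)))" "1 - cutf \<eta> (cmod (f (lift p \<gamma>))) \<le> 1"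
            using cut_bounds by auto
          moreover have "0 \<le> w \<gamma>" unfolding w_def by simp
          ultimately have "u \<gamma> \<le> (1 - cutf \<eta> (cmod (f (lift p \<gamma>)))) * (cmod (f (lift p \<gamma>)) + w \<gamma>)"
            unfolding u_def by (intro mult_left_mono) auto
          also have "\<dots> \<le> v \<gamma> + w \<gamma>"
          proof -
            have "(1 - cutf \<eta> (cmod (f (lift p \<gamma>)))) * w \<gamma> \<le> w \<gamma>"
              by (rule mult_left_le_one_le) (use \<open>0 \<le> w \<gamma>\<close> cut_bounds[of \<eta> "cmod (f (lift p \<gamma>))"] in auto)
            then show ?thesis unfolding v_def by (simp add: distrib_left)
          qed
          finally show ?thesis .
        qed
        have lw: "L2_set w F' \<le> \<rho>"
        proof -
          have "(\<Sum>\<gamma>\<in>F'. (w \<gamma>)\<^sup>2) \<le> \<rho>\<^sup>2"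
            unfolding w_def using colrow_bound[OF ffms ffm y F'] by simp
          then show ?thesis unfolding L2_set_def using \<rho> by (intro sqrt_le_of_sq) auto
        qed
        have lv: "L2_set v F' \<le> 2 * sqrt (real N2) * \<eta> + \<delta>2"
        proof -
          have "(\<Sum>\<gamma>\<in>F'. (v \<gamma>)\<^sup>2) = (\<Sum>\<gamma>\<in>F' \<inter> K2. (v \<gamma>)\<^sup>2) + (\<Sum>\<gamma>\<in>F' - K2. (v \<gamma>)\<^sup>2)"
            using F'(1) by (metis sum.Int_Diff)
          also have "(\<Sum>\<gamma>\<in>F' \<inter> K2. (v \<gamma>)\<^sup>2) \<le> real N2 * (2 * \<eta>)\<^sup>2"
          proof -
            have "(\<Sum>\<gamma>\<in>F' \<inter> K2. (v \<gamma>)\<^sup>2) \<le> (\<Sum>\<gamma>\<in>F' \<inter> K2. (2 * \<eta>)\<^sup>2)"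
              using v0 \<eta> by (intro sum_mono power_mono) (auto simp: v_def intro: cut_tail)
            also have "\<dots> = real (card (F' \<inter> K2)) * (2 * \<eta>)\<^sup>2" by simp
            also have "card (F' \<inter> K2) \<le> N2"
            proof -
              have "F' \<inter> K2 \<subseteq> K2 \<inter> {\<gamma>. s \<gamma> = y} \<or> F' \<inter> K2 \<subseteq> K2 \<inter> {\<gamma>. r \<gamma> = y}" using F'(2) by auto
              then show ?thesis using N2 by (meson card_mono le_trans)
            qed
            then have "real (card (F' \<inter> K2)) * (2 * \<eta>)\<^sup>2 \<le> real N2 * (2 * \<eta>)\<^sup>2"
              by (intro mult_right_mono) auto
            finally show ?thesis .
          qed
          also have "(\<Sum>\<gamma>\<in>F' - K2. (v \<gamma>)\<^sup>2) \<le> \<delta>2\<^sup>2"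
          proof -
            have "(\<Sum>\<gamma>\<in>F' - K2. (v \<gamma>)\<^sup>2) \<le> (\<Sum>\<gamma>\<in>F' - K2. (cmod (f (lift p \<gamma>) - g2 (lift p \<gamma>)))\<^sup>2)"
            proof (rule sum_mono)
              fix \<gamma> assume "\<gamma> \<in> F' - K2"
              then have "g2 (lift p \<gamma>) = 0" using supp_in_closure[of g2 \<gamma>] unfolding K2_def by blast
              moreover have "v \<gamma> \<le> cmod (f (lift p \<gamma>))" unfolding v_def
                using cut_bounds by (simp add: mult_left_le_one_le)
              ultimately show "(v \<gamma>)\<^sup>2 \<le> (cmod (f (lift p \<gamma>) - g2 (lift p \<gamma>)))\<^sup>2"
                using v0 by (simp add: power_mono)
            qed
            also have "\<dots> \<le> \<delta>2\<^sup>2"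
              using F' by (intro colrow_bound[OF fg2s fg2 y]) auto
            finally show ?thesis .
          qed
          finally have "(\<Sum>\<gamma>\<in>F'. (v \<gamma>)\<^sup>2) \<le> (2 * sqrt (real N2) * \<eta>)\<^sup>2 + \<delta>2\<^sup>2"
            by (simp add: power_mult_distrib)
          then have "L2_set v F' \<le> sqrt ((2 * sqrt (real N2) * \<eta>)\<^sup>2 + \<delta>2\<^sup>2)"
            unfolding L2_set_def by (rule real_sqrt_le_mono)
          also have "\<dots> \<le> 2 * sqrt (real N2) * \<eta> + \<delta>2"
            using \<eta> \<delta>2 by (intro sqrt_sum_sq_le) auto
          finally show ?thesis .
        qed
        have lu: "L2_set u F' \<le> 2 * sqrt (real N2) * \<eta> + \<delta>2 + \<rho>"
        proof -
          have "L2_set u F' \<le> L2_set (\<lambda>\<gamma>. v \<gamma> + w \<gamma>) F'"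
            using u0 uvw by (intro L2_set_mono) auto
          also have "\<dots> \<le> L2_set v F' + L2_set w F'" by (rule L2_set_triangle_ineq)
          finally show ?thesis using lv lw by simp
        qed
        have pt: "cmod (Rm (lift p \<gamma>) * complex_of_real ((1 + sqrt (\<psi> \<gamma>)) ^ kk)) \<le> M * u \<gamma>" for \<gamma>
        proof -
          have "cmod (Rm (lift p \<gamma>) * complex_of_real ((1 + sqrt (\<psi> \<gamma>)) ^ kk))
              = (exp (- t * \<psi> \<gamma>) * (1 + sqrt (\<psi> \<gamma>)) ^ kk) * u \<gamma>"
            unfolding Rm_def u_def using cut_bounds[of \<eta> "cmod (f (lift p \<gamma>))"]
            by (simp only: norm_mult norm_of_real p_lift abs_mult abs_of_nonneg exp_ge_zero
                 zero_le_power real_sqrt_ge_zero P.psi_nonneg add_nonneg_nonneg zero_le_one diff_ge_0_iff_ge)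
               (simp add: mult_ac)
          also have "\<dots> \<le> M * u \<gamma>" using M P.psi_nonneg[of \<gamma>] u0 by (intro mult_right_mono) auto
          finally show ?thesis .
        qed
        have "(\<Sum>\<gamma>\<in>F'. (cmod (Rm (lift p \<gamma>) * complex_of_real ((1 + sqrt (\<psi> \<gamma>)) ^ kk)))\<^sup>2)
            \<le> (\<Sum>\<gamma>\<in>F'. (M * u \<gamma>)\<^sup>2)"
          using pt by (intro sum_mono power_mono) auto
        also have "\<dots> = M\<^sup>2 * (L2_set u F')\<^sup>2"
          unfolding L2_set_def by (simp add: power_mult_distrib sum_distrib_left sum_nonneg)
        also have "\<dots> \<le> M\<^sup>2 * (2 * sqrt (real N2) * \<eta> + \<delta>2 + \<rho>)\<^sup>2"
          using lu L2_set_nonneg[of u F'] by (intro mult_left_mono power_mono) auto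
        finally show ?thesis by (simp add: power_mult_distrib)
      qed
      have nRm: "norm_2pL G0 r s p (\<lambda>g. sqrt (\<psi> g)) kk Rm \<le> ereal (M * (2 * sqrt (real N2) * \<eta> + \<delta>2 + \<rho>))"
        by (rule n2pL_le) (use colsum M1 \<eta> \<delta>2 \<rho> in auto)
      have ERm: "Ev Rm \<xi> F \<le> c * M * (2 * sqrt (real N2) * \<eta> + \<delta>2 + \<rho>)"
      proof -
        have "ereal (Ev Rm \<xi> F) \<le> rnorm G0 s mS iS p Rm" by (rule rnorm_ge[OF a F])
        also have "\<dots> \<le> ereal c * norm_2pL G0 r s p (\<lambda>g. sqrt (\<psi> g)) kk Rm" using RD Rm by blast
        also have "\<dots> \<le> ereal c * ereal (M * (2 * sqrt (real N2) * \<eta> + \<delta>2 + \<rho>))"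
          using c by (intro ereal_mult_left_mono nRm) auto
        finally show ?thesis by (simp add: mult_ac)
      qed
      have ERd: "Ev (\<lambda>\<sigma>. R \<sigma> - Rm \<sigma>) \<xi> F \<le> \<rho> * CE"
      proof -
        have "cmod (R \<sigma> - Rm \<sigma>) \<le> \<rho>" for \<sigma>
        proof -
          have "cmod (R \<sigma> - Rm \<sigma>) = ?w \<sigma> * cmod (f \<sigma> - fm \<sigma>)"
            unfolding R_def Rm_def using w01[of \<sigma>]
            by (simp add: right_diff_distrib[symmetric] norm_mult del: of_real_mult)
          also have "\<dots> \<le> 1 * \<rho>" using w01[of \<sigma>] pt_bound[OF ffms ffm] by (intro mult_mono) auto
          finally show ?thesis by simp
        qed
        then show ?thesis unfolding CE_def using Ev_pt[OF _ a F(1)] by (simp add: mult.assoc)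
      qed
      have "Ev R \<xi> F = Ev (\<lambda>\<sigma>. Rm \<sigma> + (R \<sigma> - Rm \<sigma>)) \<xi> F" by simp
      also have "\<dots> \<le> Ev Rm \<xi> F + Ev (\<lambda>\<sigma>. R \<sigma> - Rm \<sigma>) \<xi> F" by (rule Ev_add)
      also have "\<dots> \<le> c * M * (2 * sqrt (real N2) * \<eta> + \<delta>2 + \<rho>) + \<rho> * CE" using ERm ERd by simp
      also have "\<dots> = A + \<rho> * (c * M + CE)" unfolding A_def by (simp add: algebra_simps)
      also have "\<dots> \<le> A + e" using \<rho>e by simp
      finally show ?thesis .
    qed
    then have "Ev R \<xi> F \<le> A" by (rule field_le_epsilon)
    then show "ereal (Ev R \<xi> F) \<le> ereal A" by simp
  qed
  define Z where "Z = {\<gamma>. \<eta> \<le> cmod (f (lift p \<gamma>))}"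
  have Zc: "closed Z" unfolding Z_def
    by (intro closed_Collect_le continuous_on_const abs_cont[OF fs fc])
  have gZ: "p ` {\<sigma>. g \<sigma> \<noteq> 0} \<subseteq> Z"
  proof
    fix \<gamma> assume "\<gamma> \<in> p ` {\<sigma>. g \<sigma> \<noteq> 0}"
    then obtain \<sigma> where \<sigma>: "\<gamma> = p \<sigma>" "g \<sigma> \<noteq> 0" by blast
    then have "cutf \<eta> (cmod (f \<sigma>)) \<noteq> 0" unfolding g_def by auto
    then have "\<eta> < cmod (f \<sigma>)" using cut_nz[OF \<eta>] by blast
    then show "\<gamma> \<in> Z" unfolding Z_def \<sigma>(1) using section_mod_lift[OF fs, of \<sigma>] by simp
  qed
  have Zf: "Z \<subseteq> p ` {\<sigma>. f \<sigma> \<noteq> 0}"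
  proof
    fix \<gamma> assume "\<gamma> \<in> Z"
    then have "f (lift p \<gamma>) \<noteq> 0" using \<eta> unfolding Z_def by auto
    then have "lift p \<gamma> \<in> {\<sigma>. f \<sigma> \<noteq> 0}" by simp
    then have "p (lift p \<gamma>) \<in> p ` {\<sigma>. f \<sigma> \<noteq> 0}" by (rule imageI)
    then show "\<gamma> \<in> p ` {\<sigma>. f \<sigma> \<noteq> 0}" by (simp only: p_lift)
  qed
  have \<eta>h: "0 < \<eta> / 2" using \<eta> by simp
  obtain g3 where g3: "Cc_sec r mS p iota g3" and fg3: "rnorm G0 s mS iS p (\<lambda>\<sigma>. f \<sigma> - g3 \<sigma>) \<le> ereal (\<eta> / 2)"
    using approx_Cc[OF fCr \<eta>h] by blast
  have Zg3: "Z \<subseteq> p ` {\<sigma>. g3 \<sigma> \<noteq> 0}"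
  proof
    fix \<gamma> assume "\<gamma> \<in> Z"
    then have a: "\<eta> \<le> cmod (f (lift p \<gamma>))" unfolding Z_def by simp
    have "cmod (f (lift p \<gamma>) - g3 (lift p \<gamma>)) \<le> \<eta> / 2"
      by (rule pt_bound[OF sec_diff[OF fs CcD1[OF g3]] fg3])
    then have "g3 (lift p \<gamma>) \<noteq> 0" using a \<eta> by auto
    then have "lift p \<gamma> \<in> {\<sigma>. g3 \<sigma> \<noteq> 0}" by simp
    then have "p (lift p \<gamma>) \<in> p ` {\<sigma>. g3 \<sigma> \<noteq> 0}" by (rule imageI)
    then show "\<gamma> \<in> p ` {\<sigma>. g3 \<sigma> \<noteq> 0}" by (simp only: p_lift)
  qed
  have gsec: "is_section r mS p iota g" unfolding g_def
    by (rule sec_scale[OF fs]) (simp add: sec_inv_p sec_inv_abs[OF fs])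
  have gcont: "continuous_on UNIV g" unfolding g_def
    by (intro continuous_intros psip_cont continuous_on_compose2[OF cut_cont] fc) auto
  have gcomp: "compact (closure (p ` {\<sigma>. g \<sigma> \<noteq> 0}))"
    by (rule compact_closure_sub[OF _ CcD3[OF g3]]) (use gZ Zg3 in blast)
  have gCc: "Cc_sec r mS p iota g" by (rule CcI[OF gsec gcont gcomp])
  have gsupp: "closure (p ` {\<sigma>. g \<sigma> \<noteq> 0}) \<subseteq> p ` {\<sigma>. f \<sigma> \<noteq> 0}"
    using closure_minimal[OF gZ Zc] Zf by blast
  have eq: "(\<lambda>\<sigma>. complex_of_real (exp (- t * \<psi> (p \<sigma>))) * f \<sigma> - g \<sigma>) = R"
    by (intro ext) (simp add: R_def g_def algebra_simps)
  have "rnorm G0 s mS iS p (\<lambda>\<sigma>. complex_of_real (exp (- t * \<psi> (p \<sigma>))) * f \<sigma> - g \<sigma>) \<le> ereal \<epsilon>"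
    unfolding eq using RR A by (meson ereal_less_eq(3) order_trans)
  then show ?thesis using gCc gsupp by blast
qed

end


context twp begin

lemma main_twp:
  assumes RDa: "rapid_decay G0 r s mS iS p iota (\<lambda>g. sqrt (\<psi> g))"
    and fCr: "Cr_sec G0 r s mS iS p iota f"
  shows "\<forall>\<epsilon>>0. \<exists>g. Cc_sec r mS p iota g \<and>
           closure (p ` {\<sigma>. g \<sigma> \<noteq> 0}) \<subseteq> p ` {\<sigma>. f \<sigma> \<noteq> 0} \<and>
           rnorm G0 s mS iS p (\<lambda>\<sigma>. f \<sigma> - g \<sigma>) < ereal \<epsilon>"
proof (intro allI impI)
  fix \<epsilon> :: real assume \<epsilon>: "0 < \<epsilon>"
  obtain c kk where c: "0 < c" and RD: "\<forall>h. Cc_sec r mS p iota h \<longrightarrow>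
        rnorm G0 s mS iS p h \<le> ereal c * norm_2pL G0 r s p (\<lambda>g. sqrt (\<psi> g)) kk h"
    using RDa unfolding rapid_decay_def by blast
  have e8: "0 < \<epsilon> / 8" using \<epsilon> by simp
  obtain t where t: "0 < t" and st1: "rnorm G0 s mS iS p (\<lambda>\<sigma>. f \<sigma> - complex_of_real (exp (- t * \<psi> (p \<sigma>))) * f \<sigma>) \<le> ereal (3 * (\<epsilon> / 8))"
    using step1[OF fCr c RD e8] by blast
  have e4: "0 < \<epsilon> / 4" using \<epsilon> by simp
  obtain g where g: "Cc_sec r mS p iota g" "closure (p ` {\<sigma>. g \<sigma> \<noteq> 0}) \<subseteq> p ` {\<sigma>. f \<sigma> \<noteq> 0}"
    and st2: "rnorm G0 s mS iS p (\<lambda>\<sigma>. complex_of_real (exp (- t * \<psi> (p \<sigma>))) * f \<sigma> - g \<sigma>) \<le> ereal (\<epsilon> / 4)"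
    using step2[OF fCr c RD t e4] by blast
  have eq: "(\<lambda>\<sigma>. f \<sigma> - g \<sigma>) = (\<lambda>\<sigma>. (f \<sigma> - complex_of_real (exp (- t * \<psi> (p \<sigma>))) * f \<sigma>) +
      (complex_of_real (exp (- t * \<psi> (p \<sigma>))) * f \<sigma> - g \<sigma>))"
    by (intro ext) simp
  have "rnorm G0 s mS iS p (\<lambda>\<sigma>. f \<sigma> - g \<sigma>) \<le> ereal (3 * (\<epsilon> / 8)) + ereal (\<epsilon> / 4)"
    unfolding eq by (rule order_trans[OF rnorm_add add_mono[OF st1 st2]])
  also have "\<dots> < ereal \<epsilon>" using \<epsilon> by simp
  finally show "\<exists>g. Cc_sec r mS p iota g \<and> closure (p ` {\<sigma>. g \<sigma> \<noteq> 0}) \<subseteq> p ` {\<sigma>. f \<sigma> \<noteq> 0} \<and>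
           rnorm G0 s mS iS p (\<lambda>\<sigma>. f \<sigma> - g \<sigma>) < ereal \<epsilon>" using g by blast
qed

end

theorem theorem4p8:
  fixes G0 :: "'g::t2_space set" and r s i :: "'g \<Rightarrow> 'g" and m :: "'g \<Rightarrow> 'g \<Rightarrow> 'g"
    and S0 :: "'s::topological_space set" and rS sS iS :: "'s \<Rightarrow> 's" and mS :: "'s \<Rightarrow> 's \<Rightarrow> 's"
    and p :: "'s \<Rightarrow> 'g" and iota :: "complex \<Rightarrow> 'g \<Rightarrow> 's"
    and \<psi> :: "'g \<Rightarrow> real" and f :: "'s \<Rightarrow> complex"
  assumes "topological_groupoid G0 r s m i"
    and "locally_compact_sp TYPE('g)"
    and "etale r"
    and "twist G0 r s m i S0 rS sS mS iS p iota"
    and "locally_proper_negative_type G0 r s m i \<psi>"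
    and "\<exists>g. \<psi> g \<noteq> 0"
    and "rapid_decay G0 r s mS iS p iota (\<lambda>g. sqrt (\<psi> g))"
    and "Cr_sec G0 r s mS iS p iota f"
  shows "\<forall>\<epsilon>>0. \<exists>g. Cc_sec r mS p iota g \<and>
           closure (p ` {\<sigma>. g \<sigma> \<noteq> 0}) \<subseteq> p ` {\<sigma>. f \<sigma> \<noteq> 0} \<and>
           rnorm G0 s mS iS p (\<lambda>\<sigma>. f \<sigma> - g \<sigma>) < ereal \<epsilon>"
proof -
  have g1: "groupoid G0 r s m i" using assms(1) unfolding topological_groupoid_def by (rule conjunct1)
  have tgS: "topological_groupoid S0 rS sS mS iS" using assms(4) unfolding twist_def by (rule conjunct1)
  have g2: "groupoid S0 rS sS mS iS" using tgS unfolding topological_groupoid_def by (rule conjunct1)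
  interpret T: twp G0 r s i m S0 rS sS iS mS p iota \<psi>
    unfolding twp_def tw_def tw_axioms_def gpsi_def gpsi_axioms_def grpd_def
    using g1 g2 assms(1,3,4,5) by (intro conjI)
  show ?thesis by (rule T.main_twp[OF assms(7,8)])
qed


end
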